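(* Let $\mathcal{G}=(\mathcal{V},\mathcal{E})$ be an undirected connected graph with $\mathcal{V}=\{1,\dots,m\}$, let $\mathcal{X}=\{u\in\mathbb{R}^n:u\ge0,\ \mathbf{1}_n^\top u=1\}$ be the probability simplex, and consider $$\min_{\bm{x}\in\mathcal{X}^m}\ \sum_{i\in\mathcal{V}}f_i(x_i)\quad\text{s.t.}\quad(P\otimes I_n)\bm{x}=\bm{x}.$$ Let $\mathcal{D}=\{u\in\mathbb{R}^n:u>0\}$ and let $\phi=\varphi_i$ ($i\in\mathcal{V}$) be the negative entropy $\phi(u)=\sum_{k=1}^n u_k\ln u_k$ on $\mathcal{D}$. Assume: each $f_i:\mathbb{R}^n\to\mathbb{R}\cup\{+\infty\}$ is closed, proper and convex; there is $(\bm{x}^\star,\bm{\nu}^\star)$ such that for each $i$, $\sum_jP_{ij}x_j^\star=x_i^\star$ and there is $g_i\in N_{\mathcal{X}}(x_i^\star)$ with $-\nu_i^\star+\sum_jP_{ij}\nu_j^\star-g_i\in\partial f_i(x_i^\star)$; $\phi$ satisfies $B_\phi(u,v)\ge\frac{\mu}{2}\|u-v\|_p^2$ on $\mathcal{X}\cap\mathcal{D}$ for some $\mu>0$, $p\ge1$; $P\in\mathbb{R}^{m\times m}$ is symmetric, stochastic, irreducible and positive semidefinite with $P_{ij}>0$ only if $j\in\mathcal{N}(i)$. Suppose moreover that $\|g\|_2^2\le M_0$ for all $g\in\partial f_i(x_i^\star)$ and all $i\in\mathcal{V}$, for some $M_0\ge0$. Let $\rho>0$, $\tau=\rho/2$,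 $\gamma=1/4$, $\delta_1,\dots,\delta_m\ge0$, $\delta_{\max}=\max_i\delta_i$, $\bm{\nu}^{(0)}=0$, $\bm{x}^{(0)}=\mathbf{1}_m\otimes(\frac1n\mathbf{1}_n)$, and let $\{\bm{y}^{(t)},\bm{x}^{(t)},\bm{\nu}^{(t)}\}$ be generated by: for $t=0,1,\dots$ and each $i\in\mathcal{V}$, $$y_i^{(t)}=\operatorname*{argmin}_{y_i\in\mathcal{X}}\sum_{j\in\mathcal{V}}P_{ij}B_\phi(y_i,x_j^{(t)}),$$ $$x_i^{(t+1)}=\operatorname*{argmin}_{x_i\in\mathcal{X}}\ f_i(x_i)+\Big\langle x_i,\nu_i^{(t)}-\sum_{j\in\mathcal{V}}P_{ij}\nu_j^{(t)}\Big\rangle+\rho B_\phi(x_i,y_i^{(t)})+\delta_iB_{\varphi_i}(x_i,x_i^{(t)}),$$ $$\nu_i^{(t+1)}=\nu_i^{(t)}+\tau x_i^{(t+1)}-\tau\sum_{j\in\mathcal{V}}P_{ij}x_j^{(t+1)}.$$ With $\bar{\bm{x}}^{(T)}=\frac1T\sum_{t=1}^T\bm{x}^{(t)}$ and $\lambda_2(P)$ the eigenvalue of $P$ of second largest magnitude, $$\sum_{i\in\mathcal{V}}f_i(\bar x_i^{(T)})-\sum_{i\in\mathcal{V}}f_i(x_i^\star)\le\frac{m(\rho+\delta_{\max})\ln n}{T},$$ $$\frac12\big\|((I_m-P)\otimes I_n)\bar{\bm{x}}^{(T)}\big\|_2^2\le\frac{4mM_0}{\rho^2(1-\lambda_2(P))^2T}+\frac{4m(\rho+\delta_{\max})\ln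 n}{\rho T}.$$
   Context: $\mathcal{N}(i)$ is the set of neighbors of $i$; $\mathbf{1}_k$ is the all-ones vector in $\mathbb{R}^k$; $\otimes$ is the Kronecker product. $N_{\mathcal{X}}(u)=\{g:\langle g,u-v\rangle\ge0\ \forall v\in\mathcal{X}\}$ is the normal cone. $B_\psi(u,v)=\psi(u)-\psi(v)-\langle\nabla\psi(v),u-v\rangle$ is the Bregman divergence. Eigenvalues of $P$ are ordered by nonincreasing magnitude $|\lambda_1(P)|\ge|\lambda_2(P)|\ge\dots$, with $\lambda_1(P)=1$. *)

theory Defs
  imports "HOL-Analysis.Analysis" "HOL-Library.Extended_Real" "HOL-Computational_Algebra.Polynomial"
    "HOL-Library.Multiset"
begin

definition prob_simplex :: "(real^'n) set" where
  "prob_simplex = {u. (\<forall>k. u$k \<ge> 0) \<and> (\<Sum>k\<in>UNIV. u$k) = 1}"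

definition posorth :: "(real^'n) set" where
  "posorth = {u. \<forall>k. u$k > 0}"

text \<open>Negative entropy (note ln 0 = 0 in Isabelle, so 0 ln 0 = 0) and its gradient on D.\<close>
definition negent :: "real^'n \<Rightarrow> real" where
  "negent u = (\<Sum>k\<in>UNIV. u$k * ln (u$k))"

definition negent_grad :: "real^'n \<Rightarrow> real^'n" where
  "negent_grad v = (\<chi> k. ln (v$k) + 1)"

definition bregman :: "real^'n \<Rightarrow> real^'n \<Rightarrow> real" where
  "bregman u v = negent u - negent v - negent_grad v \<bullet> (u - v)"

definition pnorm :: "real \<Rightarrow> real^'n \<Rightarrow> real" where
  "pnorm p u = (\<Sum>k\<in>UNIV. \<bar>u$k\<bar> powr p) powr (1/p)"

definition normal_cone :: "(real^'n) set \<Rightarrow> real^'n \<Rightarrow> (real^'n) set" where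
  "normal_cone X u = (if u \<in> X then {g. \<forall>v\<in>X. g \<bullet> (u - v) \<ge> 0} else {})"

definition epigraph :: "(real^'n \<Rightarrow> ereal) \<Rightarrow> ((real^'n) \<times> real) set" where
  "epigraph f = {(x, r). f x \<le> ereal r}"

definition proper_fun :: "(real^'n \<Rightarrow> ereal) \<Rightarrow> bool" where
  "proper_fun f \<longleftrightarrow> (\<forall>x. f x \<noteq> -\<infinity>) \<and> (\<exists>x. f x \<noteq> \<infinity>)"

definition convex_fun :: "(real^'n \<Rightarrow> ereal) \<Rightarrow> bool" where
  "convex_fun f \<longleftrightarrow> convex (epigraph f)"

definition closed_fun :: "(real^'n \<Rightarrow> ereal) \<Rightarrow> bool" where
  "closed_fun f \<longleftrightarrow> closed (epigraph f)"

definition subdiff :: "(real^'n \<Rightarrow> ereal) \<Rightarrow> real^'n \<Rightarrow> (real^'n) set" where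
  "subdiff f x = {g. \<bar>f x\<bar> \<noteq> \<infinity> \<and> (\<forall>y. f y \<ge> f x + ereal (g \<bullet> (y - x)))}"

definition symmetric_mat :: "real^'m^'m \<Rightarrow> bool" where
  "symmetric_mat P \<longleftrightarrow> (\<forall>i j. P$i$j = P$j$i)"

definition stochastic_mat :: "real^'m^'m \<Rightarrow> bool" where
  "stochastic_mat P \<longleftrightarrow> (\<forall>i j. P$i$j \<ge> 0) \<and> (\<forall>i. (\<Sum>j\<in>UNIV. P$i$j) = 1)"

definition irreducible_mat :: "real^'m^'m \<Rightarrow> bool" where
  "irreducible_mat P \<longleftrightarrow> (\<forall>i j. (i, j) \<in> {(a, b). P$a$b > 0}\<^sup>+)"

definition psd_mat :: "real^'m^'m \<Rightarrow> bool" where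
  "psd_mat P \<longleftrightarrow> (\<forall>x. x \<bullet> (P *v x) \<ge> 0)"

definition charpoly :: "real^'m^'m \<Rightarrow> real poly" where
  "charpoly P = det (\<chi> i j. (if i = j then [:0, 1:] else 0) - [:P$i$j:])"

definition eigenvalues_by_magnitude :: "real^'m^'m \<Rightarrow> real list" where
  "eigenvalues_by_magnitude P =
     sort_key (\<lambda>x. - \<bar>x\<bar>) (sorted_list_of_multiset (proots (charpoly P)))"

definition lambda2 :: "real^'m^'m \<Rightarrow> real" where
  "lambda2 P = eigenvalues_by_magnitude P ! 1"

definition undirected_graph :: "('m \<Rightarrow> 'm \<Rightarrow> bool) \<Rightarrow> bool" where
  "undirected_graph E \<longleftrightarrow> (\<forall>i j. E i j \<longleftrightarrow> E j i) \<and> (\<forall>i. \<not> E i i)"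

definition connected_graph :: "('m \<Rightarrow> 'm \<Rightarrow> bool) \<Rightarrow> bool" where
  "connected_graph E \<longleftrightarrow> (\<forall>i j. (i, j) \<in> {(a, b). E a b}\<^sup>*)"

definition neighbors :: "('m \<Rightarrow> 'm \<Rightarrow> bool) \<Rightarrow> 'm \<Rightarrow> 'm set" where
  "neighbors E i = {j. E i j}"

end

theory Submission
  imports Defs
begin

lemma lnk_mono:
  fixes a b :: real
  assumes "0 < a" "a \<le> b" "b \<le> 1"
  shows "ln a - a \<le> ln b - b"
proof (rule DERIV_nonneg_imp_increasing_open[OF assms(2)])
  fix x assume x: "a < x" "x < b"
  then have "x > 0" "x \<le> 1" using assms by auto
  show "\<exists>y. ((\<lambda>t. ln t - t) has_real_derivative y) (at x) \<and> 0 \<le> y"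
    apply (rule exI[of _ "1/x - 1"])
    using \<open>x > 0\<close> \<open>x \<le> 1\<close>
    by (auto intro!: derivative_eq_intros simp: field_simps)
next
  show "continuous_on {a..b} (\<lambda>t. ln t - t)"
    using assms by (intro continuous_intros) auto
qed

definition bs :: "real \<Rightarrow> real \<Rightarrow> real" where
  "bs u v = u * ln u - v * ln v - (ln v + 1) * (u - v)"

lemma bs_lower:
  fixes u v :: real
  assumes u: "0 \<le> u" "u \<le> 1" and v: "0 < v" "v \<le> 1"
  shows "(u - v)^2 / 2 \<le> bs u v"
proof -
  define g where "g u = u * ln u - v * ln v - (ln v + 1) * (u - v) - (u - v)^2 / 2" for u
  have gv: "g v = 0" by (simp add: g_def)
  have cont: "continuous_on {a..b} g" if "0 < a" for a b
    unfolding g_def using that by (intro continuous_intros) auto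
  have der: "(g has_real_derivative (ln x - ln v - (x - v))) (at x)" if "x > 0" for x
    unfolding g_def using that
    by (auto intro!: derivative_eq_intros simp: field_simps)
  have "0 \<le> g u"
  proof (cases "u = 0")
    case True
    then show ?thesis using v by (simp add: g_def power2_eq_square algebra_simps)
  next
    case False
    then have up: "u > 0" using u by auto
    show ?thesis
    proof (cases "v \<le> u")
      case True
      have "g v \<le> g u"
      proof (rule DERIV_nonneg_imp_increasing_open[where f=g and a=v and b=u, OF True])
        fix x assume x: "v < x" "x < u"
        have "ln v - v \<le> ln x - x" using lnk_mono[of v x] x v u by auto
        then show "\<exists>y. (g has_real_derivative y) (at x) \<and> 0 \<le> y"
          using der[of x] x v by (intro exI[of _ "ln x - ln v - (x - v)"]) auto
      qed (rule cont[OF v(1)])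
      then show ?thesis using gv by simp
    next
      case False
      have "g v \<le> g u"
      proof (rule DERIV_nonpos_imp_decreasing_open[where f=g and a=u and b=v])
        show "u \<le> v" using False by simp
        fix x assume x: "u < x" "x < v"
        have "ln x - x \<le> ln v - v" using lnk_mono[of x v] x v up by auto
        then show "\<exists>y. (g has_real_derivative y) (at x) \<and> y \<le> 0"
          using der[of x] x up by (intro exI[of _ "ln x - ln v - (x - v)"]) auto
      qed (rule cont[OF up])
      then show ?thesis using gv by simp
    qed
  qed
  then show ?thesis by (simp add: g_def bs_def)
qed

lemma bs_upper:
  fixes u v :: real
  assumes u: "0 \<le> u" and v: "0 < v"
  shows "bs u v \<le> (u - v)^2 / v"
proof (cases "u = 0")
  case True
  then show ?thesis using v by (simp add: bs_def power2_eq_square field_simps)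
next
  case False
  then have up: "u > 0" using u by auto
  have "ln (u / v) \<le> u / v - 1" using up v by (intro ln_le_minus_one) auto
  then have "u * ln (u/v) \<le> u * (u / v - 1)" using up by (intro mult_left_mono) auto
  moreover have "ln (u / v) = ln u - ln v" using up v by (simp add: ln_div)
  ultimately have "u * ln u - u * ln v \<le> u * u / v - u" using v by (simp add: algebra_simps)
  then show ?thesis using v unfolding bs_def
    by (simp add: power2_eq_square field_simps) 
qed

lemma xlnx_convex:
  fixes a b s :: real
  assumes "0 < a" "0 < b" "0 \<le> s" "s \<le> 1"
  shows "((1 - s) * a + s * b) * ln ((1 - s) * a + s * b) \<le> (1 - s) * (a * ln a) + s * (b * ln b)"
proof -
  have "convex_on {0<..} (\<lambda>x::real. x * ln x)"
  proof (rule convex_on_realI[where f' = "\<lambda>x. ln x + 1"])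
    show "connected {0::real<..}" by simp
    fix x :: real assume "x \<in> {0<..}"
    then show "((\<lambda>x. x * ln x) has_real_derivative ln x + 1) (at x)"
      by (auto intro!: derivative_eq_intros)
  next
    fix x y :: real assume "x \<in> {0<..}" "y \<in> {0<..}" "x \<le> y"
    then show "ln x + 1 \<le> ln y + 1" by auto
  qed
  from convex_onD[OF this, of s a b] show ?thesis using assms by simp
qed

lemma bregman_bs: "bregman u v = (\<Sum>k\<in>UNIV. bs (u$k) (v$k))"
  unfolding bregman_def negent_def negent_grad_def bs_def inner_vec_def
  by (simp add: sum_subtractf[symmetric])

lemma simplex_nonneg: "u \<in> prob_simplex \<Longrightarrow> 0 \<le> u$k"
  by (simp add: prob_simplex_def)

lemma simplex_sum: "u \<in> prob_simplex \<Longrightarrow> (\<Sum>k\<in>UNIV. u$k) = 1"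
  by (simp add: prob_simplex_def)

lemma simplex_le1: "u \<in> prob_simplex \<Longrightarrow> u$k \<le> 1"
proof -
  assume u: "u \<in> prob_simplex"
  have "u$k \<le> (\<Sum>k\<in>UNIV. u$k)"
    by (rule member_le_sum) (auto simp: simplex_nonneg[OF u])
  then show ?thesis using simplex_sum[OF u] by simp
qed

lemma norm_sq_vec: "(norm (x::real^'n))^2 = (\<Sum>k\<in>UNIV. (x$k)^2)"
proof -
  have "(norm x)^2 = x \<bullet> x" by (rule power2_norm_eq_inner)
  then show ?thesis by (simp add: inner_vec_def power2_eq_square)
qed

lemma bregman_lower:
  assumes "u \<in> prob_simplex" "v \<in> prob_simplex" "v \<in> posorth"
  shows "(norm (u - v))^2 / 2 \<le> bregman u v"
proof -
  have "(norm (u - v))^2 / 2 = (\<Sum>k\<in>UNIV. ((u$k - v$k))^2 / 2)"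
    by (simp add: norm_sq_vec sum_divide_distrib)
  also have "\<dots> \<le> (\<Sum>k\<in>UNIV. bs (u$k) (v$k))"
    using assms by (intro sum_mono bs_lower)
      (auto simp: simplex_nonneg simplex_le1 posorth_def)
  finally show ?thesis by (simp add: bregman_bs)
qed

lemma bregman_nonneg:
  assumes "u \<in> prob_simplex" "v \<in> prob_simplex" "v \<in> posorth"
  shows "0 \<le> bregman u v"
  using bregman_lower[OF assms] by (rule order_trans[rotated]) simp

lemma bregman_upper:
  assumes "\<And>k. 0 \<le> u$k" "v \<in> posorth"
  shows "bregman u v \<le> (\<Sum>k\<in>UNIV. (u$k - v$k)^2 / v$k)"
  unfolding bregman_bs using assms
  by (intro sum_mono bs_upper) (auto simp: posorth_def)

lemma bregman_three:
  "bregman a c = bregman a b + bregman b c + (negent_grad b - negent_grad c) \<bullet> (a - b)"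
  unfolding bregman_def by (simp add: algebra_simps inner_diff_left inner_diff_right)

lemma unif_simplex:
  "((\<chi> k. 1 / real CARD('n)) :: real^'n) \<in> prob_simplex \<inter> posorth"
  by (simp add: prob_simplex_def posorth_def)

lemma bregman_unif:
  assumes "c \<in> prob_simplex"
  shows "bregman c ((\<chi> k. 1 / real CARD('n)) :: real^'n) \<le> ln (real CARD('n))"
proof -
  let ?n = "real CARD('n)"
  have n: "?n > 0" by simp
  have "bregman c ((\<chi> k. 1 / ?n)) = (\<Sum>k\<in>UNIV. c$k * ln (c$k)) + ln ?n"
  proof -
    have "bregman c ((\<chi> k. 1 / ?n)) = (\<Sum>k\<in>UNIV. c$k * ln (c$k) - (1/?n) * ln (1/?n) - (ln (1/?n) + 1) * (c$k - 1/?n))"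
      by (simp add: bregman_bs bs_def)
    also have "\<dots> = (\<Sum>k\<in>UNIV. c$k * ln (c$k)) - (\<Sum>k\<in>(UNIV::'n set). (1/?n) * ln (1/?n)) - (ln (1/?n) + 1) * ((\<Sum>k\<in>UNIV. c$k) - (\<Sum>k\<in>(UNIV::'n set). 1/?n))"
      by (simp add: sum_subtractf sum_distrib_left right_diff_distrib)
    also have "\<dots> = (\<Sum>k\<in>UNIV. c$k * ln (c$k)) + ln ?n"
      using simplex_sum[OF assms] n by (simp add: ln_div)
    finally show ?thesis .
  qed
  moreover have "(\<Sum>k\<in>UNIV. c$k * ln (c$k)) \<le> 0"
  proof (rule sum_nonpos)
    fix k
    have "0 \<le> c$k" "c$k \<le> 1" using assms simplex_nonneg simplex_le1 by auto
    then show "c$k * ln (c$k) \<le> 0"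
      by (cases "c$k = 0") (auto intro!: mult_nonneg_nonpos)
  qed
  ultimately show ?thesis by simp
qed

lemma simplex_dist2:
  assumes "u \<in> prob_simplex" "v \<in> prob_simplex"
  shows "(norm (u - v))^2 \<le> 2"
proof -
  have "(norm (u - v))^2 = (\<Sum>k\<in>UNIV. (u$k - v$k)^2)" by (simp add: norm_sq_vec)
  also have "\<dots> \<le> (\<Sum>k\<in>UNIV. u$k + v$k)"
  proof (rule sum_mono)
    fix k
    have a: "0 \<le> u$k" "u$k \<le> 1" "0 \<le> v$k" "v$k \<le> 1"
      using assms simplex_nonneg simplex_le1 by auto
    have d: "\<bar>u$k - v$k\<bar> \<le> 1" using a by auto
    have "(u$k - v$k)^2 = \<bar>u$k - v$k\<bar> * \<bar>u$k - v$k\<bar>"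
      by (simp add: power2_eq_square)
    also have "\<dots> \<le> \<bar>u$k - v$k\<bar> * 1"
      by (rule mult_left_mono[OF d]) simp
    finally have "(u$k - v$k)^2 \<le> \<bar>u$k - v$k\<bar> * 1" .
    also have "\<dots> \<le> u$k + v$k" using a by auto
    finally show "(u$k - v$k)^2 \<le> u$k + v$k" .
  qed
  also have "\<dots> = 2" using assms by (simp add: sum.distrib simplex_sum)
  finally show ?thesis .
qed

definition mix :: "real^'m^'m \<Rightarrow> ('m \<Rightarrow> real^'n) \<Rightarrow> 'm \<Rightarrow> real^'n" where
  "mix P v i = (\<Sum>j\<in>UNIV. P$i$j *\<^sub>R v j)"

definition ip :: "('m \<Rightarrow> real^'n) \<Rightarrow> ('m \<Rightarrow> real^'n) \<Rightarrow> real" where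
  "ip v w = (\<Sum>i\<in>UNIV. v i \<bullet> w i)"

lemma ip_comm: "ip v w = ip w v"
  by (simp add: ip_def inner_commute)

lemma ip_diff_left: "ip (\<lambda>i. v i - w i) u = ip v u - ip w u"
  by (simp add: ip_def inner_diff_left sum_subtractf)

lemma ip_diff_right: "ip u (\<lambda>i. v i - w i) = ip u v - ip u w"
  by (simp add: ip_def inner_diff_right sum_subtractf)

lemma ip_add_left: "ip (\<lambda>i. v i + w i) u = ip v u + ip w u"
  by (simp add: ip_def inner_add_left sum.distrib)

lemma ip_add_right: "ip u (\<lambda>i. v i + w i) = ip u v + ip u w"
  by (simp add: ip_def inner_add_right sum.distrib)

lemma ip_scale_left: "ip (\<lambda>i. c *\<^sub>R v i) u = c * ip v u"
  by (simp add: ip_def sum_distrib_left)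

lemma ip_scale_right: "ip u (\<lambda>i. c *\<^sub>R v i) = c * ip u v"
  by (simp add: ip_def sum_distrib_left)

lemma ip_self_nonneg: "0 \<le> ip v v"
  by (simp add: ip_def sum_nonneg)

lemma ip_self_zero: "ip (v::'m::finite \<Rightarrow> real^'n) v = 0 \<Longrightarrow> v i = 0"
  unfolding ip_def by (subst (asm) sum_nonneg_eq_0_iff) auto

lemma mix_diff: "mix P (\<lambda>i. v i - w i) = (\<lambda>i. mix P v i - mix P w i)"
  by (rule ext) (simp add: mix_def scaleR_diff_right sum_subtractf)

lemma mix_add: "mix P (\<lambda>i. v i + w i) = (\<lambda>i. mix P v i + mix P w i)"
  by (rule ext) (simp add: mix_def scaleR_add_right sum.distrib)

lemma mix_scale: "mix P (\<lambda>i. c *\<^sub>R v i) = (\<lambda>i. c *\<^sub>R mix P v i)"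
  by (rule ext) (simp add: mix_def scaleR_sum_right mult.commute)

lemma mix_const:
  assumes "stochastic_mat P"
  shows "mix (P::real^'m::finite^'m) (\<lambda>i. c) = (\<lambda>i. c)"
proof (rule ext)
  fix i
  have "mix P (\<lambda>i. c) i = (\<Sum>j\<in>UNIV. P$i$j) *\<^sub>R c"
    unfolding mix_def by (rule scaleR_sum_left[symmetric])
  then show "mix P (\<lambda>i. c) i = c" using assms by (simp add: stochastic_mat_def)
qed

lemma colsum:
  assumes "symmetric_mat P" "stochastic_mat P"
  shows "(\<Sum>i\<in>UNIV. (P::real^'m::finite^'m)$i$j) = 1"
proof -
  have "(\<Sum>i\<in>UNIV. P$i$j) = (\<Sum>i\<in>UNIV. P$j$i)"
    using assms(1) unfolding symmetric_mat_def by (intro sum.cong) auto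
  then show ?thesis using assms(2) by (simp add: stochastic_mat_def)
qed

lemma ip_mix_sym:
  assumes "symmetric_mat (P::real^'m::finite^'m)"
  shows "ip (mix P v) w = ip v (mix P w)"
proof -
  have "ip (mix P v) w = (\<Sum>i\<in>UNIV. \<Sum>j\<in>UNIV. P$i$j * (v j \<bullet> w i))"
    by (simp add: ip_def mix_def inner_sum_left)
  also have "\<dots> = (\<Sum>j\<in>UNIV. \<Sum>i\<in>UNIV. P$j$i * (v j \<bullet> w i))"
    using assms unfolding symmetric_mat_def by (subst sum.swap) simp
  also have "\<dots> = ip v (mix P w)"
    by (simp add: ip_def mix_def inner_sum_right mult.commute)
  finally show ?thesis .
qed

lemma sum_mix:
  assumes "symmetric_mat P" "stochastic_mat P"
  shows "(\<Sum>i\<in>UNIV. mix (P::real^'m::finite^'m) v i) = (\<Sum>i\<in>UNIV. v i)"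
proof -
  have "(\<Sum>i\<in>UNIV. mix P v i) = (\<Sum>i\<in>UNIV. \<Sum>j\<in>UNIV. P$i$j *\<^sub>R v j)"
    by (simp add: mix_def)
  also have "\<dots> = (\<Sum>j\<in>UNIV. \<Sum>i\<in>UNIV. P$i$j *\<^sub>R v j)" by (rule sum.swap)
  also have "\<dots> = (\<Sum>j\<in>UNIV. (\<Sum>i\<in>UNIV. P$i$j) *\<^sub>R v j)"
    by (simp add: scaleR_sum_left)
  also have "\<dots> = (\<Sum>j\<in>UNIV. v j)" using colsum[OF assms] by simp
  finally show ?thesis .
qed

lemma jensen_vec:
  fixes p :: "'m \<Rightarrow> real" and v :: "'m \<Rightarrow> real^'n"
  assumes "finite A" "sum p A = 1" "\<And>j. j \<in> A \<Longrightarrow> 0 \<le> p j"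
  shows "(\<Sum>j\<in>A. p j *\<^sub>R v j) \<bullet> (\<Sum>j\<in>A. p j *\<^sub>R v j) \<le> (\<Sum>j\<in>A. p j * (v j \<bullet> v j))"
proof -
  define V where "V = (\<Sum>j\<in>A. p j *\<^sub>R v j)"
  have "0 \<le> (\<Sum>j\<in>A. p j * ((v j - V) \<bullet> (v j - V)))"
    using assms by (intro sum_nonneg mult_nonneg_nonneg) auto
  also have "\<dots> = (\<Sum>j\<in>A. p j * (v j \<bullet> v j)) - 2 * ((\<Sum>j\<in>A. p j *\<^sub>R v j) \<bullet> V) + (\<Sum>j\<in>A. p j) * (V \<bullet> V)"
    by (simp add: inner_diff_left inner_diff_right algebra_simps sum.distrib sum_subtractf
        sum_distrib_left sum_distrib_right inner_sum_left inner_sum_right inner_commute)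
  also have "\<dots> = (\<Sum>j\<in>A. p j * (v j \<bullet> v j)) - V \<bullet> V"
    using assms(2) by (simp add: V_def)
  finally show ?thesis by (simp add: V_def)
qed

lemma nsq_mix:
  assumes "symmetric_mat P" "stochastic_mat P"
  shows "ip (mix (P::real^'m::finite^'m) v) (mix P v) \<le> ip v v"
proof -
  have "ip (mix P v) (mix P v) \<le> (\<Sum>i\<in>UNIV. \<Sum>j\<in>UNIV. P$i$j * (v j \<bullet> v j))"
    unfolding ip_def mix_def
    using assms(2) by (intro sum_mono jensen_vec) (auto simp: stochastic_mat_def)
  also have "\<dots> = (\<Sum>j\<in>UNIV. \<Sum>i\<in>UNIV. P$i$j * (v j \<bullet> v j))" by (rule sum.swap)
  also have "\<dots> = (\<Sum>j\<in>UNIV. (\<Sum>i\<in>UNIV. P$i$j) * (v j \<bullet> v j))"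
    by (simp add: sum_distrib_right)
  also have "\<dots> = ip v v" using colsum[OF assms] by (simp add: ip_def)
  finally show ?thesis .
qed

lemma ip_mix_le:
  assumes "symmetric_mat P" "stochastic_mat P"
  shows "ip v (mix (P::real^'m::finite^'m) v) \<le> ip v v"
proof -
  have "0 \<le> ip (\<lambda>i. v i - mix P v i) (\<lambda>i. v i - mix P v i)" by (rule ip_self_nonneg)
  also have "\<dots> = ip v v - 2 * ip v (mix P v) + ip (mix P v) (mix P v)"
    by (simp add: ip_diff_left ip_diff_right ip_comm[of "mix P v" v])
  finally show ?thesis using nsq_mix[OF assms, of v] by simp
qed

lemma psd_block:
  assumes "psd_mat (P::real^'m::finite^'m)"
  shows "0 \<le> ip v (mix P v)"
proof -
  have "ip v (mix P v) = (\<Sum>i\<in>UNIV. \<Sum>k\<in>UNIV. v i $ k * (\<Sum>j\<in>UNIV. P$i$j * v j $ k))"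
    by (simp add: ip_def mix_def inner_vec_def)
  also have "\<dots> = (\<Sum>k\<in>UNIV. \<Sum>i\<in>UNIV. v i $ k * (\<Sum>j\<in>UNIV. P$i$j * v j $ k))"
    by (rule sum.swap)
  also have "\<dots> = (\<Sum>k\<in>UNIV. (\<chi> i. v i $ k) \<bullet> (P *v (\<chi> i. v i $ k)))"
    by (simp add: inner_vec_def matrix_vector_mult_def)
  also have "\<dots> \<ge> 0" using assms unfolding psd_mat_def by (intro sum_nonneg) auto
  finally show ?thesis .
qed

lemma lap_sq:
  assumes "symmetric_mat P" "stochastic_mat P"
  shows "ip (\<lambda>i. v i - mix (P::real^'m::finite^'m) v i) (\<lambda>i. v i - mix P v i)
         \<le> 2 * ip v (\<lambda>i. v i - mix P v i)"
proof -
  have "ip (\<lambda>i. v i - mix P v i) (\<lambda>i. v i - mix P v i) = ip v v - 2 * ip v (mix P v) + ip (mix P v) (mix P v)"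
    by (simp add: ip_diff_left ip_diff_right ip_comm[of "mix P v" v])
  moreover have "ip v (\<lambda>i. v i - mix P v i) = ip v v - ip v (mix P v)"
    by (simp add: ip_diff_right)
  ultimately show ?thesis using nsq_mix[OF assms, of v] by simp
qed

lemma cross_sum:
  assumes "symmetric_mat P" "stochastic_mat P" "psd_mat P"
  shows "ip a (\<lambda>i. a i - mix (P::real^'m::finite^'m) a i)
     \<le> (\<Sum>i\<in>UNIV. \<Sum>j\<in>UNIV. P$i$j * ((a i - b j) \<bullet> (a i - b j)))"
proof -
  have rs: "\<And>i. (\<Sum>j\<in>UNIV. P$i$j) = 1" using assms(2) by (simp add: stochastic_mat_def)
  have cs: "\<And>j. (\<Sum>i\<in>UNIV. P$i$j) = 1" using colsum[OF assms(1,2)] .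
  have e1: "(\<Sum>i\<in>UNIV. \<Sum>j\<in>UNIV. P$i$j * ((a i - b j) \<bullet> (a i - b j)))
      = (\<Sum>i\<in>UNIV. \<Sum>j\<in>UNIV. P$i$j * (a i \<bullet> a i)) - 2 * (\<Sum>i\<in>UNIV. \<Sum>j\<in>UNIV. P$i$j * (a i \<bullet> b j))
        + (\<Sum>i\<in>UNIV. \<Sum>j\<in>UNIV. P$i$j * (b j \<bullet> b j))"
  proof -
    have pt: "P$i$j * ((a i - b j) \<bullet> (a i - b j)) = P$i$j * (a i \<bullet> a i) - 2 * (P$i$j * (a i \<bullet> b j)) + P$i$j * (b j \<bullet> b j)" for i j
      by (simp add: inner_diff_left inner_diff_right inner_commute[of "b j" "a i"] algebra_simps)
    have "(\<Sum>i\<in>UNIV. \<Sum>j\<in>UNIV. P$i$j * ((a i - b j) \<bullet> (a i - b j)))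
      = (\<Sum>i\<in>UNIV. \<Sum>j\<in>UNIV. P$i$j * (a i \<bullet> a i) - 2 * (P$i$j * (a i \<bullet> b j)) + P$i$j * (b j \<bullet> b j))"
      by (simp only: pt)
    also have "\<dots> = (\<Sum>i\<in>UNIV. \<Sum>j\<in>UNIV. P$i$j * (a i \<bullet> a i)) - (\<Sum>i\<in>UNIV. \<Sum>j\<in>UNIV. 2 * (P$i$j * (a i \<bullet> b j)))
        + (\<Sum>i\<in>UNIV. \<Sum>j\<in>UNIV. P$i$j * (b j \<bullet> b j))"
      by (simp only: sum.distrib sum_subtractf)
    finally show ?thesis by (simp only: sum_distrib_left[symmetric])
  qed
  have e2: "(\<Sum>i\<in>UNIV. \<Sum>j\<in>UNIV. P$i$j * (a i \<bullet> a i)) = ip a a"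
  proof -
    have "(\<Sum>i\<in>UNIV. \<Sum>j\<in>UNIV. P$i$j * (a i \<bullet> a i)) = (\<Sum>i\<in>UNIV. (\<Sum>j\<in>UNIV. P$i$j) * (a i \<bullet> a i))"
      by (simp add: sum_distrib_right)
    then show ?thesis using rs by (simp add: ip_def)
  qed
  have e3: "(\<Sum>i\<in>UNIV. \<Sum>j\<in>UNIV. P$i$j * (b j \<bullet> b j)) = ip b b"
  proof -
    have "(\<Sum>i\<in>UNIV. \<Sum>j\<in>UNIV. P$i$j * (b j \<bullet> b j)) = (\<Sum>j\<in>UNIV. \<Sum>i\<in>UNIV. P$i$j * (b j \<bullet> b j))"
      by (rule sum.swap)
    also have "\<dots> = (\<Sum>j\<in>UNIV. (\<Sum>i\<in>UNIV. P$i$j) * (b j \<bullet> b j))"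
      by (simp add: sum_distrib_right)
    finally show ?thesis using cs by (simp add: ip_def)
  qed
  have e4: "(\<Sum>i\<in>UNIV. \<Sum>j\<in>UNIV. P$i$j * (a i \<bullet> b j)) = ip a (mix P b)"
    by (simp add: ip_def mix_def inner_sum_right)
  have eq: "(\<Sum>i\<in>UNIV. \<Sum>j\<in>UNIV. P$i$j * ((a i - b j) \<bullet> (a i - b j)))
      = ip a a - 2 * ip a (mix P b) + ip b b" using e1 e2 e3 e4 by simp
  have "0 \<le> ip (\<lambda>i. a i - b i) (mix P (\<lambda>i. a i - b i))" by (rule psd_block[OF assms(3)])
  also have "\<dots> = ip a (mix P a) - 2 * ip a (mix P b) + ip b (mix P b)"
    using ip_mix_sym[OF assms(1), of b a] ip_comm[of "mix P b" a]
    by (simp add: mix_diff ip_diff_left ip_diff_right)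
  finally have "0 \<le> ip a (mix P a) - 2 * ip a (mix P b) + ip b (mix P b)" .
  moreover have "ip b (mix P b) \<le> ip b b" by (rule ip_mix_le[OF assms(1,2)])
  moreover have "ip a (\<lambda>i. a i - mix P a i) = ip a a - ip a (mix P a)" by (simp add: ip_diff_right)
  ultimately show ?thesis unfolding eq by linarith
qed

lemma max_principle:
  fixes P :: "real^'m::finite^'m" and v :: "'m \<Rightarrow> real"
  assumes st: "stochastic_mat P" and irr: "irreducible_mat P"
    and fx: "\<And>i. (\<Sum>j\<in>UNIV. P$i$j * v j) = v i"
  shows "v i = v j"
proof -
  define M where "M = Max (range v)"
  have vle: "v k \<le> M" for k unfolding M_def by simp
  obtain i0 where i0: "v i0 = M" unfolding M_def
    by (metis (mono_tags, lifting) Max_in UNIV_not_empty empty_is_image finite imageE finite_imageI)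
  have step: "v b = M" if "v a = M" "P$a$b > 0" for a b
  proof (rule ccontr)
    assume nb: "v b \<noteq> M"
    then have vb: "v b < M" using vle[of b] by simp
    have "(\<Sum>j\<in>UNIV. P$a$j * (M - v j)) = (\<Sum>j\<in>UNIV. P$a$j) * M - (\<Sum>j\<in>UNIV. P$a$j * v j)"
      by (simp add: right_diff_distrib sum_subtractf sum_distrib_right)
    also have "\<dots> = 0" using fx[of a] that(1) st by (simp add: stochastic_mat_def)
    finally have z: "(\<Sum>j\<in>UNIV. P$a$j * (M - v j)) = 0" .
    have nn: "\<forall>j\<in>UNIV. 0 \<le> P$a$j * (M - v j)"
      using st vle by (auto simp: stochastic_mat_def)
    have "P$a$b * (M - v b) = 0" using z nn by (subst (asm) sum_nonneg_eq_0_iff) auto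
    then show False using that(2) vb by simp
  qed
  have all: "v k = M" for k
  proof -
    have "(i0, k) \<in> {(a, b). P$a$b > 0}\<^sup>+" using irr by (simp add: irreducible_mat_def)
    then show ?thesis
      by (induction rule: trancl_induct) (use i0 step in auto)
  qed
  show ?thesis using all[of i] all[of j] by simp
qed

definition onesv :: "real^'m" where "onesv = (\<chi> i. 1)"

lemma onesv_inner: "onesv \<bullet> v = (\<Sum>i\<in>UNIV. v$i)"
  by (simp add: onesv_def inner_vec_def)

lemma Pv_comp: "(P *v v)$i = (\<Sum>j\<in>UNIV. P$i$j * v$j)"
  by (simp add: matrix_vector_mult_def)

lemma sum_Pv:
  assumes "symmetric_mat P" "stochastic_mat P"
  shows "onesv \<bullet> ((P::real^'m::finite^'m) *v v) = onesv \<bullet> v"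
proof -
  have "onesv \<bullet> (P *v v) = (\<Sum>i\<in>UNIV. \<Sum>j\<in>UNIV. P$i$j * v$j)"
    by (simp add: onesv_inner Pv_comp)
  also have "\<dots> = (\<Sum>j\<in>UNIV. \<Sum>i\<in>UNIV. P$i$j * v$j)" by (rule sum.swap)
  also have "\<dots> = (\<Sum>j\<in>UNIV. (\<Sum>i\<in>UNIV. P$i$j) * v$j)" by (simp add: sum_distrib_right)
  also have "\<dots> = onesv \<bullet> v" using colsum[OF assms] by (simp add: onesv_inner)
  finally show ?thesis .
qed

lemma Pv_sym:
  assumes "symmetric_mat (P::real^'m::finite^'m)"
  shows "u \<bullet> (P *v w) = w \<bullet> (P *v u)"
proof -
  have "u \<bullet> (P *v w) = (\<Sum>i\<in>UNIV. \<Sum>j\<in>UNIV. u$i * (P$i$j * w$j))"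
    by (simp add: inner_vec_def Pv_comp sum_distrib_left)
  also have "\<dots> = (\<Sum>j\<in>UNIV. \<Sum>i\<in>UNIV. u$i * (P$i$j * w$j))" by (rule sum.swap)
  also have "\<dots> = w \<bullet> (P *v u)"
    using assms unfolding symmetric_mat_def
    by (simp add: inner_vec_def Pv_comp sum_distrib_left mult.commute mult.left_commute)
  finally show ?thesis .
qed

lemma Pv_le:
  assumes "symmetric_mat P" "stochastic_mat P"
  shows "v \<bullet> ((P::real^'m::finite^'m) *v v) \<le> v \<bullet> v"
proof -
  have rs: "\<And>i. (\<Sum>j\<in>UNIV. P$i$j) = 1" using assms(2) by (simp add: stochastic_mat_def)
  have nn: "\<And>i j. 0 \<le> P$i$j" using assms(2) by (simp add: stochastic_mat_def)
  have "v \<bullet> (P *v v) = (\<Sum>i\<in>UNIV. \<Sum>j\<in>UNIV. P$i$j * (v$i * v$j))"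
    by (simp add: inner_vec_def Pv_comp sum_distrib_left mult.commute mult.left_commute)
  also have "\<dots> \<le> (\<Sum>i\<in>UNIV. \<Sum>j\<in>UNIV. P$i$j * ((v$i)^2 / 2 + (v$j)^2 / 2))"
  proof (intro sum_mono mult_left_mono[OF _ nn])
    fix i j
    have "0 \<le> (v$i - v$j)^2" by simp
    then show "v$i * v$j \<le> (v$i)^2 / 2 + (v$j)^2 / 2" by (simp add: power2_eq_square algebra_simps)
  qed
  also have "\<dots> = (\<Sum>i\<in>UNIV. \<Sum>j\<in>UNIV. P$i$j * (v$i)^2) / 2 + (\<Sum>i\<in>UNIV. \<Sum>j\<in>UNIV. P$i$j * (v$j)^2) / 2"
    by (simp add: distrib_left sum.distrib sum_divide_distrib)
  also have "(\<Sum>i\<in>UNIV. \<Sum>j\<in>UNIV. P$i$j * (v$i)^2) = (\<Sum>i\<in>UNIV. (v$i)^2)"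
    using rs by (simp add: sum_distrib_right[symmetric])
  also have "(\<Sum>i\<in>UNIV. \<Sum>j\<in>UNIV. P$i$j * (v$j)^2) = (\<Sum>j\<in>UNIV. \<Sum>i\<in>UNIV. P$i$j * (v$j)^2)"
    by (rule sum.swap)
  also have "\<dots> = (\<Sum>j\<in>UNIV. (v$j)^2)"
    using colsum[OF assms] by (simp add: sum_distrib_right[symmetric])
  finally show ?thesis by (simp add: inner_vec_def power2_eq_square)
qed

lemma lin_zero:
  fixes b c :: real
  assumes "\<And>t. 2 * t * b + t^2 * c \<le> 0"
  shows "b = 0"
proof -
  obtain K where K: "K = \<bar>c\<bar> + 1" by simp
  have pos: "K > 0" using K by simp
  define t where "t = b / K"
  have "2 * t * b + t^2 * c \<le> 0" by (rule assms)
  then have "(2 * t * b + t^2 * c) * K^2 \<le> 0"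
    by (simp add: mult_nonpos_nonneg)
  also have "(2 * t * b + t^2 * c) * K^2 = b^2 * (2 * K + c)"
    unfolding t_def using pos by (simp add: field_simps power2_eq_square)
  finally have "b^2 * (2 * K + c) \<le> 0" .
  moreover have "2 * K + c > 0" using K by linarith
  ultimately have "b^2 \<le> 0" by (simp add: mult_le_0_iff)
  then show ?thesis by simp
qed

lemma two_elems:
  assumes "CARD('m::finite) \<ge> 2"
  obtains a b :: "'m::finite" where "a \<noteq> b"
proof -
  obtain a :: "'m" where True by simp
  show ?thesis
  proof (cases "\<exists>b::'m. b \<noteq> a")
    case True then show ?thesis using that by blast
  next
    case False
    then have eq: "(UNIV::'m set) = {a}" by auto
    have "card (UNIV::'m set) = card {a}" by (subst eq) (rule refl)
    then have "CARD('m) = 1" by simp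
    then show ?thesis using assms by simp
  qed
qed

lemma rayleigh:
  fixes P :: "real^'m::finite^'m"
  assumes sym: "symmetric_mat P" and st: "stochastic_mat P" and irr: "irreducible_mat P"
    and m2: "CARD('m) \<ge> 2"
  obtains \<mu> v0 where "onesv \<bullet> v0 = 0" "v0 \<bullet> v0 = 1" "P *v v0 = \<mu> *\<^sub>R v0" "\<mu> < 1"
     "\<And>v. onesv \<bullet> v = 0 \<Longrightarrow> v \<bullet> (P *v v) \<le> \<mu> * (v \<bullet> v)"
proof -
  define U where "U = {v::real^'m. onesv \<bullet> v = 0} \<inter> sphere 0 1"
  have cU: "compact U" unfolding U_def
    by (intro closed_Int_compact closed_hyperplane compact_sphere)
  obtain a b :: 'm where ab: "a \<noteq> b" using two_elems[OF m2] by blast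
  define w :: "real^'m" where "w = axis a 1 - axis b 1"
  have w0: "onesv \<bullet> w = 0" using ab by (simp add: w_def inner_diff_right onesv_def inner_axis)
  have wn: "w \<noteq> 0" using ab by (simp add: w_def vec_eq_iff axis_def) (metis)
  have "(1 / norm w) *\<^sub>R w \<in> U" using w0 wn by (simp add: U_def)
  then have neU: "U \<noteq> {}" by auto
  have cont: "continuous_on U (\<lambda>v. v \<bullet> (P *v v))"
    by (intro continuous_intros matrix_vector_mult_linear_continuous_on)
  obtain v0 where v0U: "v0 \<in> U" and vmax: "\<And>y. y \<in> U \<Longrightarrow> y \<bullet> (P *v y) \<le> v0 \<bullet> (P *v v0)"
    using continuous_attains_sup[OF cU neU cont] by blast
  define \<mu> where "\<mu> = v0 \<bullet> (P *v v0)"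
  have v0S: "onesv \<bullet> v0 = 0" and v0n: "v0 \<bullet> v0 = 1"
    using v0U by (auto simp: U_def dot_square_norm)
  have gen: "v \<bullet> (P *v v) \<le> \<mu> * (v \<bullet> v)" if vS: "onesv \<bullet> v = 0" for v
  proof (cases "v = 0")
    case True then show ?thesis by simp
  next
    case False
    define u where "u = (1 / norm v) *\<^sub>R v"
    have "u \<in> U" using vS False by (simp add: U_def u_def)
    then have "u \<bullet> (P *v u) \<le> \<mu>" using vmax \<mu>_def by simp
    moreover have "u \<bullet> (P *v u) = (v \<bullet> (P *v v)) / (v \<bullet> v)"
      using False by (simp add: u_def matrix_vector_mult_scaleR dot_square_norm power2_eq_square)
    moreover have "v \<bullet> v > 0" using False by simp
    ultimately show ?thesis by (simp add: divide_le_eq mult.commute)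
  qed
  have eig: "P *v v0 = \<mu> *\<^sub>R v0"
  proof -
    define d where "d = P *v v0 - \<mu> *\<^sub>R v0"
    have dS: "onesv \<bullet> d = 0" using sum_Pv[OF sym st, of v0] v0S by (simp add: d_def inner_diff_right)
    have "2 * t * (d \<bullet> d) + t^2 * (d \<bullet> (P *v d) - \<mu> * (d \<bullet> d)) \<le> 0" for t
    proof -
      have S: "onesv \<bullet> (v0 + t *\<^sub>R d) = 0" using v0S dS by (simp add: inner_add_right)
      have I: "(v0 + t *\<^sub>R d) \<bullet> (P *v (v0 + t *\<^sub>R d)) \<le> \<mu> * ((v0 + t *\<^sub>R d) \<bullet> (v0 + t *\<^sub>R d))"
        by (rule gen[OF S])
      have E1: "(v0 + t *\<^sub>R d) \<bullet> (P *v (v0 + t *\<^sub>R d))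
          = \<mu> + 2 * t * (d \<bullet> (P *v v0)) + t^2 * (d \<bullet> (P *v d))"
        using Pv_sym[OF sym, of v0 d] unfolding \<mu>_def
        by (simp add: matrix_vector_right_distrib matrix_vector_mult_scaleR inner_add_left
            inner_add_right power2_eq_square algebra_simps)
      have E2: "(v0 + t *\<^sub>R d) \<bullet> (v0 + t *\<^sub>R d) = 1 + 2 * t * (d \<bullet> v0) + t^2 * (d \<bullet> d)"
        using v0n by (simp add: inner_add_left inner_add_right inner_commute power2_eq_square algebra_simps)
      have DA: "d \<bullet> d = d \<bullet> (P *v v0) - \<mu> * (d \<bullet> v0)"
        unfolding d_def by (simp add: inner_diff_right inner_diff_left inner_commute algebra_simps)
      obtain A B C D where ABCD: "A = d \<bullet> (P *v v0)" "B = d \<bullet> (P *v d)" "C = d \<bullet> v0" "D = d \<bullet> d" by simp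
      have I2: "\<mu> + 2 * t * A + t^2 * B \<le> \<mu> * (1 + 2 * t * C + t^2 * D)"
        using I unfolding E1 E2 ABCD .
      have DA2: "D = A - \<mu> * C" using DA ABCD by simp
      have "2 * t * D + t^2 * (B - \<mu> * D) = (\<mu> + 2 * t * A + t^2 * B) - \<mu> * (1 + 2 * t * C + t^2 * D)"
        unfolding DA2 by (simp add: algebra_simps)
      then have "2 * t * D + t^2 * (B - \<mu> * D) \<le> 0" using I2 by linarith
      then show ?thesis using ABCD by simp
    qed
    then have "d \<bullet> d = 0" by (rule lin_zero)
    then show ?thesis by (simp add: d_def)
  qed
  have mu1: "\<mu> \<le> 1" using Pv_le[OF sym st, of v0] v0n \<mu>_def by simp
  have "\<mu> \<noteq> 1"
  proof
    assume "\<mu> = 1"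
    then have fx: "P *v v0 = v0" using eig by simp
    have c: "v0$i = v0$j" for i j
      by (rule max_principle[OF st irr, of "\<lambda>i. v0$i"]) (metis Pv_comp fx)
    obtain i0 :: 'm where True by simp
    have "(\<Sum>i\<in>UNIV. v0$i) = (\<Sum>i\<in>(UNIV::'m set). v0$i0)"
      by (rule sum.cong) (auto intro: c)
    then have "onesv \<bullet> v0 = (\<Sum>i\<in>(UNIV::'m set). v0$i0)" by (simp add: onesv_inner)
    then have "v0$i0 = 0" using v0S by simp
    then have "v0 = 0" unfolding vec_eq_iff using c by (metis zero_index)
    then show False using v0n by simp
  qed
  then show ?thesis using that[OF v0S v0n eig _ gen] mu1 by simp
qed

lemma row_eq: "row i A = A $ i"
  by (simp add: row_def vec_eq_iff)

lemma poly_det: "poly (det (M :: real poly^'m::finite^'m)) x = det (\<chi> i j. poly (M$i$j) x)"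
  by (simp add: det_def poly_sum poly_prod poly_of_int)

lemma charpoly_eval:
  "poly (charpoly (P :: real^'m::finite^'m)) x = det (\<chi> i j. (if i = j then x else 0) - P$i$j)"
  unfolding charpoly_def poly_det by (rule arg_cong[where f=det]) (simp add: vec_eq_iff)

lemma shiftmat_mult:
  "(\<chi> i j. (if i = j then x else 0) - (P :: real^'m::finite^'m)$i$j) *v v = x *\<^sub>R v - P *v v"
proof -
  have "(\<Sum>j\<in>UNIV. ((if i = j then x else 0) - P$i$j) * v$j) = x * v$i - (\<Sum>j\<in>UNIV. P$i$j * v$j)" for i
  proof -
    have e: "((if i = j then x else 0) - P$i$j) * v$j = (if i = j then x * v$i else 0) - P$i$j * v$j" for j
      by (auto simp: left_diff_distrib)
    have "(\<Sum>j\<in>UNIV. ((if i = j then x else 0) - P$i$j) * v$j)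
        = (\<Sum>j\<in>UNIV. (if i = j then x * v$i else 0)) - (\<Sum>j\<in>UNIV. P$i$j * v$j)"
      unfolding e by (rule sum_subtractf)
    also have "(\<Sum>j\<in>UNIV. (if i = j then x * v$i else 0)) = x * v$i"
      by (simp add: sum.delta')
    finally show ?thesis .
  qed
  then show ?thesis unfolding vec_eq_iff matrix_vector_mult_def by simp
qed

lemma det_zero_iff_eig:
  fixes A :: "real^'m::finite^'m"
  shows "det A = 0 \<longleftrightarrow> (\<exists>v. v \<noteq> 0 \<and> A *v v = 0)"
proof -
  have "det A \<noteq> 0 \<longleftrightarrow> inj ((*v) A)"
    using det_nz_iff_inj[OF matrix_vector_mul_linear[of A]] by simp
  also have "\<dots> \<longleftrightarrow> (\<forall>v. A *v v = 0 \<longrightarrow> v = 0)"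
    by (rule linear_injective_0[OF matrix_vector_mul_linear])
  finally show ?thesis by blast
qed

lemma root_iff_eig:
  "poly (charpoly (P :: real^'m::finite^'m)) r = 0 \<longleftrightarrow> (\<exists>v. v \<noteq> 0 \<and> P *v v = r *\<^sub>R v)"
proof -
  have e: "(r *\<^sub>R v - P *v v = 0) = (P *v v = r *\<^sub>R v)" for v by (metis right_minus_eq)
  show ?thesis unfolding charpoly_eval det_zero_iff_eig shiftmat_mult e ..
qed

lemma root_range:
  assumes sym: "symmetric_mat P" and st: "stochastic_mat P" and psd: "psd_mat P"
    and r: "poly (charpoly (P :: real^'m::finite^'m)) r = 0"
  shows "0 \<le> r \<and> r \<le> 1"
proof -
  have "\<exists>v. v \<noteq> 0 \<and> P *v v = r *\<^sub>R v" using r by (simp only: root_iff_eig)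
  then obtain v where v: "v \<noteq> 0" "P *v v = r *\<^sub>R v" by blast
  have pos: "v \<bullet> v > 0" using v by simp
  have e: "v \<bullet> (P *v v) = r * (v \<bullet> v)" using v by simp
  have a: "0 \<le> v \<bullet> (P *v v)" using psd by (simp add: psd_mat_def)
  have b: "v \<bullet> (P *v v) \<le> v \<bullet> v" by (rule Pv_le[OF sym st])
  have "0 \<le> r * (v \<bullet> v)" using a e by simp
  then have r0: "0 \<le> r" using pos by (simp add: zero_le_mult_iff)
  have "r * (v \<bullet> v) \<le> 1 * (v \<bullet> v)" using b e by simp
  then have r1: "r \<le> 1" using pos by (simp only: mult_le_cancel_right_pos)
  show ?thesis using r0 r1 by simp
qed

lemma det_sumrow:
  fixes B :: "real^'m::finite^'m"
  shows "det (\<chi> k. if k = a then (\<Sum>l\<in>UNIV. B$l) else B$k) = det B"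
proof -
  define x where "x = (\<Sum>l\<in>UNIV-{a}. B$l)"
  have xs: "x \<in> vec.span {row j B |j. j \<noteq> a}"
    unfolding x_def by (intro vec.span_sum vec.span_base) (auto simp: row_eq)
  have e: "(\<Sum>l\<in>UNIV. B$l) = row a B + x"
    unfolding x_def row_eq by (simp add: sum.remove[of UNIV a])
  have "(\<chi> k. if k = a then (\<Sum>l\<in>UNIV. B$l) else B$k) = (\<chi> k. if k = a then row a B + x else row k B)"
    by (simp only: e row_eq)
  also have "det \<dots> = det B" by (rule det_row_span[OF xs])
  finally show ?thesis by simp
qed

lemma det_addrows:
  fixes u :: "real^'m::finite" and r :: "'m \<Rightarrow> real^'m"
  assumes "finite K" "a \<notin> K"
  shows "det (\<chi> k. if k = a then u else if k \<in> K then r k + c *s u else r k)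
       = det (\<chi> k. if k = a then u else r k)"
  using assms
proof (induction K rule: finite_induct)
  case empty
  then show ?case by (simp only: empty_iff if_False)
next
  case (insert j K)
  define B where "B = (\<chi> k. if k = a then u else if k \<in> K then r k + c *s u else r k)"
  have ja: "j \<noteq> a" using insert by auto
  have rowB: "row k B = (if k = a then u else if k \<in> K then r k + c *s u else r k)" for k
    by (simp add: B_def row_eq)
  have xs: "c *s u \<in> vec.span {row l B |l. l \<noteq> j}"
  proof -
    have "u \<in> {row l B |l. l \<noteq> j}" using ja rowB[of a] by auto
    then show ?thesis by (intro vec.span_scale vec.span_base)
  qed
  have "(\<chi> k. if k = a then u else if k \<in> insert j K then r k + c *s u else r k)
      = (\<chi> k. if k = j then row j B + c *s u else row k B)"
    using ja insert(2) by (auto simp: vec_eq_iff rowB)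
  also have "det \<dots> = det B" by (rule det_row_span[OF xs])
  also have "det B = det (\<chi> k. if k = a then u else r k)"
    unfolding B_def using insert by simp
  finally show ?case .
qed

lemma det_rank1:
  fixes P :: "real^'m::finite^'m" and x :: real
  assumes sym: "symmetric_mat P" and st: "stochastic_mat P"
  shows "(x - 1) * det (\<chi> i j. (if i = j then x else 0) - (P$i$j - 1 / real CARD('m)))
       = x * det (\<chi> i j. (if i = j then x else 0) - P$i$j)"
proof -
  define m where "m = real CARD('m)"
  have m0: "m > 0" by (simp add: m_def)
  define A where "A = (\<chi> i j. (if i = j then x else 0) - P$i$j)"
  define M where "M = (\<chi> i j. (if i = j then x else 0) - (P$i$j - 1 / m))"
  have cs: "(\<Sum>k\<in>UNIV. P$k$j) = 1" for j using colsum[OF sym st] .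
  have dl: "(\<Sum>k\<in>UNIV. (if k = j then x else 0)) = x" for j :: 'm by (simp add: sum.delta)
  have sumA: "(\<Sum>k\<in>UNIV. A$k) = (x - 1) *s onesv"
  proof -
    have "(\<Sum>k\<in>UNIV. A$k$j) = x - 1" for j
      unfolding A_def using dl[of j] cs[of j] by (simp add: sum_subtractf)
    then show ?thesis by (simp add: vec_eq_iff sum_component onesv_def)
  qed
  have sumM: "(\<Sum>k\<in>UNIV. M$k) = x *s onesv"
  proof -
    have "(\<Sum>k\<in>UNIV. M$k$j) = x - 1 + m * (1 / m)" for j
      unfolding M_def using dl[of j] cs[of j] by (simp add: sum_subtractf m_def sum.distrib algebra_simps)
    then show ?thesis using m0 by (simp add: vec_eq_iff sum_component onesv_def)
  qed
  obtain a :: 'm where True by simp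
  define At where "At = (\<chi> k. if k = a then onesv else A$k)"
  have dA: "det A = (x - 1) * det At"
  proof -
    have "det A = det (\<chi> k. if k = a then (\<Sum>l\<in>UNIV. A$l) else A$k)"
      by (rule det_sumrow[symmetric])
    also have "\<dots> = det (\<chi> k. if k = a then (x - 1) *s onesv else A$k)" by (simp only: sumA)
    also have "\<dots> = (x - 1) * det At"
      unfolding At_def by (rule det_row_mul)
    finally show ?thesis .
  qed
  have rowM: "M$k = A$k + (1/m) *s onesv" for k
    by (simp add: M_def A_def vec_eq_iff onesv_def algebra_simps)
  have dM: "det M = x * det At"
  proof -
    have "det M = det (\<chi> k. if k = a then (\<Sum>l\<in>UNIV. M$l) else M$k)"
      by (rule det_sumrow[symmetric])
    also have "\<dots> = det (\<chi> k. if k = a then x *s onesv else M$k)" by (simp only: sumM)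
    also have "\<dots> = x * det (\<chi> k. if k = a then onesv else M$k)"
      by (rule det_row_mul)
    also have "(\<chi> k. if k = a then onesv else M$k)
        = (\<chi> k. if k = a then onesv else if k \<in> UNIV - {a} then A$k + (1/m) *s onesv else A$k)"
      by (simp add: vec_eq_iff rowM)
    also have "det \<dots> = det At" unfolding At_def by (rule det_addrows) auto
    finally show ?thesis .
  qed
  show ?thesis using dA dM unfolding A_def M_def m_def by simp
qed

definition Qm :: "real^'m::finite^'m \<Rightarrow> real^'m^'m" where
  "Qm P = (\<chi> i j. (if i = j then 1 else 0) - (P$i$j - 1 / real CARD('m)))"

lemma onesv_comp [simp]: "onesv $ i = 1"
  by (simp add: onesv_def)

lemma onesv_self: "onesv \<bullet> (onesv::real^'m::finite) = real CARD('m)"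
  unfolding onesv_inner by simp

lemma Qm_mult:
  fixes P :: "real^'m::finite^'m"
  shows "Qm P *v v = v - P *v v + ((onesv \<bullet> v) / real CARD('m::finite)) *\<^sub>R onesv"
proof -
  have "(\<Sum>j\<in>UNIV. ((if i = j then 1 else 0) - (P$i$j - 1 / real CARD('m))) * v$j)
      = v$i - (\<Sum>j\<in>UNIV. P$i$j * v$j) + (\<Sum>j\<in>UNIV. v$j) / real CARD('m)" for i
  proof -
    have e: "((if i = j then 1 else 0) - (P$i$j - 1 / real CARD('m))) * v$j
        = (if i = j then v$i else 0) - P$i$j * v$j + v$j / real CARD('m)" for j
      by (auto simp: algebra_simps)
    have "(\<Sum>j\<in>UNIV. ((if i = j then 1 else 0) - (P$i$j - 1 / real CARD('m))) * v$j)
        = (\<Sum>j\<in>UNIV. (if i = j then v$i else 0)) - (\<Sum>j\<in>UNIV. P$i$j * v$j) + (\<Sum>j\<in>UNIV. v$j / real CARD('m))"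
      unfolding e by (simp only: sum.distrib sum_subtractf)
    also have "(\<Sum>j\<in>UNIV. (if i = j then v$i else 0)) = v$i" by (simp add: sum.delta')
    also have "(\<Sum>j\<in>UNIV. v$j / real CARD('m)) = (\<Sum>j\<in>UNIV. v$j) / real CARD('m)"
      by (simp add: sum_divide_distrib)
    finally show ?thesis .
  qed
  then show ?thesis
    unfolding vec_eq_iff Qm_def matrix_vector_mult_def by (simp add: onesv_inner)
qed

lemma onesv_Qm:
  assumes sym: "symmetric_mat P" and st: "stochastic_mat P"
  shows "onesv \<bullet> (Qm (P::real^'m::finite^'m) *v v) = onesv \<bullet> v"
  unfolding Qm_mult using sum_Pv[OF sym st, of v]
  by (simp add: inner_add_right inner_diff_right onesv_self)

lemma Qm_inj:
  fixes P :: "real^'m::finite^'m"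
  assumes sym: "symmetric_mat P" and st: "stochastic_mat P" and irr: "irreducible_mat P"
    and m2: "CARD('m) \<ge> 2" and z: "Qm P *v v = 0"
  shows "v = 0"
proof -
  obtain \<mu> v0 where mu: "\<mu> < 1" and gen: "\<And>v. onesv \<bullet> v = 0 \<Longrightarrow> v \<bullet> (P *v v) \<le> \<mu> * (v \<bullet> v)"
    using rayleigh[OF sym st irr m2] by metis
  have S: "onesv \<bullet> v = 0" using onesv_Qm[OF sym st, of v] z by simp
  then have "v - P *v v = 0" using z unfolding Qm_mult by simp
  then have "P *v v = v" by simp
  then have "v \<bullet> v \<le> \<mu> * (v \<bullet> v)" using gen[OF S] by simp
  then have "(1 - \<mu>) * (v \<bullet> v) \<le> 0" by (simp add: algebra_simps)
  then have "v \<bullet> v \<le> 0" using mu by (simp add: mult_le_0_iff)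
  then have "v \<bullet> v = 0" using inner_ge_zero[of v] by linarith
  then show ?thesis by simp
qed

lemma order_one:
  fixes P :: "real^'m::finite^'m"
  assumes sym: "symmetric_mat P" and st: "stochastic_mat P" and irr: "irreducible_mat P"
    and m2: "CARD('m) \<ge> 2"
  shows "charpoly P \<noteq> 0 \<and> count (proots (charpoly P)) 1 = 1"
proof -
  define cp2 where "cp2 = det (\<chi> i j. (if i = j then [:0, 1:] else 0) - [:P$i$j - 1 / real CARD('m):])"
  have ev: "poly cp2 x = det (\<chi> i j. (if i = j then x else 0) - (P$i$j - 1 / real CARD('m)))" for x
    unfolding cp2_def poly_det by (rule arg_cong[where f=det]) (simp add: vec_eq_iff)
  have c1: "poly cp2 1 \<noteq> 0"
  proof
    assume "poly cp2 1 = 0"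
    then have "det (Qm P) = 0" unfolding ev Qm_def .
    then obtain v where "v \<noteq> 0" "Qm P *v v = 0" using det_zero_iff_eig by blast
    then show False using Qm_inj[OF sym st irr m2] by blast
  qed
  then have cp0: "cp2 \<noteq> 0" by auto
  have id: "[:-1, 1:] * cp2 = [:0, 1:] * charpoly P"
  proof -
    have "poly ([:-1, 1:] * cp2) x = poly ([:0, 1:] * charpoly P) x" for x
      using det_rank1[OF sym st, of x] by (simp add: ev charpoly_eval left_diff_distrib)
    then show ?thesis using poly_eq_poly_eq_iff by blast
  qed
  have h: "[:-1, 1:] \<noteq> (0::real poly)" by simp
  have nz: "[:-1, 1:] * cp2 \<noteq> 0" using h cp0 mult_eq_0_iff by blast
  then have cpn: "charpoly P \<noteq> 0" using id by auto
  have "order 1 ([:-1, 1:] * cp2) = 1"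
  proof -
    have "order 1 ([:-1, 1:] * cp2) = order 1 [:-1, 1::real:] + order 1 cp2" by (rule order_mult[OF nz])
    moreover have "order 1 [:-1, 1::real:] = (1::nat)"
      using order_power_n_n[of "1::real" 1] by simp
    moreover have "order 1 cp2 = 0" using c1 by (rule order_0I)
    ultimately show ?thesis by simp
  qed
  moreover have "order 1 ([:0, 1:] * charpoly P) = order 1 (charpoly P)"
  proof -
    have "[:0, 1:] * charpoly P \<noteq> 0" using nz unfolding id by assumption
    then have "order 1 ([:0, 1:] * charpoly P) = order 1 [:0, 1::real:] + order 1 (charpoly P)"
      by (rule order_mult)
    moreover have "order 1 [:0::real, 1:] = 0" by (rule order_0I) simp
    ultimately show ?thesis by simp
  qed
  ultimately have "order 1 (charpoly P) = 1" using id by simp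
  then show ?thesis using cpn count_proots[OF cpn] by simp
qed

lemma lambda2_bound:
  fixes P :: "real^'m::finite^'m"
  assumes sym: "symmetric_mat P" and st: "stochastic_mat P" and irr: "irreducible_mat P"
    and psd: "psd_mat P" and m2: "CARD('m) \<ge> 2"
  shows "lambda2 P < 1 \<and> (\<forall>v. onesv \<bullet> v = 0 \<longrightarrow> (1 - lambda2 P) * (v \<bullet> v) \<le> v \<bullet> (v - P *v v))"
proof -
  obtain \<mu> v0 where v0S: "onesv \<bullet> v0 = 0" and v0n: "v0 \<bullet> v0 = 1" and eig: "P *v v0 = \<mu> *\<^sub>R v0"
    and mu: "\<mu> < 1" and gen: "\<And>v. onesv \<bullet> v = 0 \<Longrightarrow> v \<bullet> (P *v v) \<le> \<mu> * (v \<bullet> v)"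
    using rayleigh[OF sym st irr m2] by metis
  have oo: "charpoly P \<noteq> 0" "count (proots (charpoly P)) 1 = 1"
    using order_one[OF sym st irr m2] by auto
  define l where "l = eigenvalues_by_magnitude P"
  have ml: "mset l = proots (charpoly P)"
    by (simp add: l_def eigenvalues_by_magnitude_def mset_sort)
  have setl: "x \<in> set l \<longleftrightarrow> poly (charpoly P) x = 0" for x
  proof -
    have "x \<in> set l \<longleftrightarrow> x \<in># mset l" by simp
    also have "\<dots> \<longleftrightarrow> poly (charpoly P) x = 0" unfolding ml using set_count_proots[OF oo(1)] by auto
    finally show ?thesis .
  qed
  have rng: "0 \<le> x \<and> x \<le> 1" if "x \<in> set l" for x
    using root_range[OF sym st psd] that setl by blast
  have srt: "sorted (map (\<lambda>x. - \<bar>x\<bar>) l)"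
    unfolding l_def eigenvalues_by_magnitude_def by (rule sorted_sort_key)
  have mono: "l ! j \<le> l ! i" if "i \<le> j" "j < length l" for i j
  proof -
    have "map (\<lambda>x. - \<bar>x\<bar>) l ! i \<le> map (\<lambda>x. - \<bar>x\<bar>) l ! j"
      using sorted_nth_mono[OF srt, of i j] that by simp
    then have "- \<bar>l!i\<bar> \<le> - \<bar>l!j\<bar>" using that by simp
    moreover have "0 \<le> l!i" "0 \<le> l!j" using rng nth_mem that by (metis le_less_trans)+
    ultimately show ?thesis by simp
  qed
  have one_in: "1 \<in> set l"
  proof -
    have "P *v onesv = 1 *\<^sub>R onesv"
      using st by (simp add: vec_eq_iff Pv_comp stochastic_mat_def)
    moreover have "onesv \<noteq> (0::real^'m)" by (simp add: vec_eq_iff)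
    ultimately show ?thesis unfolding setl root_iff_eig by blast
  qed
  have mu_in: "\<mu> \<in> set l"
  proof -
    have "v0 \<noteq> 0" using v0n by auto
    then show ?thesis unfolding setl root_iff_eig using eig by blast
  qed
  have len: "length l \<ge> 2"
  proof -
    have "{1, \<mu>} \<subseteq> set l" using one_in mu_in by auto
    then have "card {1, \<mu>} \<le> card (set l)" by (intro card_mono) auto
    moreover have "card {1, \<mu>} = 2" using mu by simp
    ultimately show ?thesis using card_length[of l] by linarith
  qed
  have l2: "lambda2 P = l ! 1" by (simp add: lambda2_def l_def)
  have lt1: "l ! 1 < 1"
  proof (rule ccontr)
    assume "\<not> l ! 1 < 1"
    moreover have "l ! 1 \<le> 1" using rng[of "l!1"] nth_mem[of 1 l] len by linarith
    ultimately have a1: "l ! 1 = 1" by simp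
    have "l ! 1 \<le> l ! 0" using mono[of 0 1] len by simp
    moreover have "l ! 0 \<le> 1" using rng[of "l!0"] nth_mem[of 0 l] len by linarith
    ultimately have a0: "l ! 0 = 1" using a1 by simp
    have ln: "l \<noteq> []" using len by auto
    have d0: "l!0 # drop 1 l = l" using Cons_nth_drop_Suc[of 0 l] ln by simp
    have d1: "l!1 # drop 2 l = drop 1 l" using Cons_nth_drop_Suc[of 1 l] len by (simp add: numeral_2_eq_2)
    have "l = l!0 # l!1 # drop 2 l" using d0 d1 by simp
    then have "mset l = mset (l!0 # l!1 # drop 2 l)" by (rule arg_cong)
    then have "mset l = add_mset 1 (add_mset 1 (mset (drop 2 l)))" using a0 a1 by simp
    then have "count (mset l) 1 \<ge> 2" by simp
    then show False using oo(2) ml by simp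
  qed
  have mule: "\<mu> \<le> l ! 1"
  proof -
    obtain k where k: "k < length l" "l ! k = \<mu>" using mu_in by (metis in_set_conv_nth)
    show ?thesis
    proof (cases "k = 0")
      case True
      obtain k1 where k1: "k1 < length l" "l ! k1 = 1" using one_in by (metis in_set_conv_nth)
      have "l ! k1 \<le> l ! 0" using mono[of 0 k1] k1 by simp
      then show ?thesis using k1 k True mu by simp
    next
      case False
      then show ?thesis using mono[of 1 k] k by simp
    qed
  qed
  have "\<forall>v. onesv \<bullet> v = 0 \<longrightarrow> (1 - lambda2 P) * (v \<bullet> v) \<le> v \<bullet> (v - P *v v)"
  proof (intro allI impI)
    fix v :: "real^'m" assume S: "onesv \<bullet> v = 0"
    have "(1 - lambda2 P) * (v \<bullet> v) \<le> (1 - \<mu>) * (v \<bullet> v)"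
      using mule l2 by (intro mult_right_mono) auto
    also have "\<dots> \<le> v \<bullet> (v - P *v v)"
      using gen[OF S] by (simp add: inner_diff_right algebra_simps)
    finally show "(1 - lambda2 P) * (v \<bullet> v) \<le> v \<bullet> (v - P *v v)" .
  qed
  then show ?thesis using lt1 l2 by simp
qed

lemma solve_lap:
  fixes P :: "real^'m::finite^'m"
  assumes sym: "symmetric_mat P" and st: "stochastic_mat P" and irr: "irreducible_mat P"
    and psd: "psd_mat P" and m2: "CARD('m) \<ge> 2" and wS: "onesv \<bullet> w = 0"
  shows "\<exists>\<nu>. \<nu> - P *v \<nu> = w \<and> (1 - lambda2 P) * norm \<nu> \<le> norm w"
proof -
  have lin: "linear ((*v) (Qm P))" by (rule matrix_vector_mul_linear)
  have inj: "inj ((*v) (Qm P))"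
    unfolding linear_injective_0[OF lin] using Qm_inj[OF sym st irr m2] by blast
  have "surj ((*v) (Qm P))" by (rule linear_injective_imp_surjective[OF lin inj]) simp
  then obtain \<nu> where nu: "Qm P *v \<nu> = w" by (metis surjD)
  have S: "onesv \<bullet> \<nu> = 0" using onesv_Qm[OF sym st, of \<nu>] nu wS by simp
  then have eq: "\<nu> - P *v \<nu> = w" using nu unfolding Qm_mult by simp
  have lb: "lambda2 P < 1 \<and> (\<forall>v. onesv \<bullet> v = 0 \<longrightarrow> (1 - lambda2 P) * (v \<bullet> v) \<le> v \<bullet> (v - P *v v))"
    by (rule lambda2_bound[OF sym st irr psd m2])
  have "(1 - lambda2 P) * (\<nu> \<bullet> \<nu>) \<le> \<nu> \<bullet> w" using lb S eq by auto
  also have "\<dots> \<le> norm \<nu> * norm w" by (rule Cauchy_Schwarz_ineq2[THEN order_trans[OF abs_ge_self]])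
  finally have "(1 - lambda2 P) * (norm \<nu> * norm \<nu>) \<le> norm \<nu> * norm w"
    by (simp add: dot_square_norm power2_eq_square)
  then have "norm \<nu> * ((1 - lambda2 P) * norm \<nu>) \<le> norm \<nu> * norm w" by (simp add: algebra_simps)
  then have "(1 - lambda2 P) * norm \<nu> \<le> norm w"
    by (cases "norm \<nu> = 0") (auto simp: mult_le_cancel_left_pos)
  then show ?thesis using eq by blast
qed

lemma epi_mem: "(x, r) \<in> epigraph f \<longleftrightarrow> f x \<le> ereal r"
  by (simp add: epigraph_def)

lemma cvx2:
  assumes "convex_fun f" "f x \<le> ereal a" "f z \<le> ereal c" "0 \<le> s" "s \<le> 1"
  shows "f ((1 - s) *\<^sub>R x + s *\<^sub>R z) \<le> ereal ((1 - s) * a + s * c)"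
proof -
  have "(1 - s) *\<^sub>R (x, a) + s *\<^sub>R (z, c) \<in> epigraph f"
    using assms by (intro convexD[of "epigraph f"]) (auto simp: convex_fun_def epi_mem)
  then show ?thesis by (simp add: epi_mem)
qed

lemma cvx_sum:
  assumes "convex_fun f" "finite A" "sum a A = 1" "\<And>t. t \<in> A \<Longrightarrow> 0 \<le> a t"
    "\<And>t. t \<in> A \<Longrightarrow> f (x t) \<le> ereal (r t)"
  shows "f (\<Sum>t\<in>A. a t *\<^sub>R x t) \<le> ereal (\<Sum>t\<in>A. a t * r t)"
proof -
  have "(\<Sum>t\<in>A. a t *\<^sub>R (x t, r t)) \<in> epigraph f"
    using assms by (intro convex_sum) (auto simp: convex_fun_def epi_mem)
  moreover have "(\<Sum>t\<in>A. a t *\<^sub>R (x t, r t)) = ((\<Sum>t\<in>A. a t *\<^sub>R x t), (\<Sum>t\<in>A. a t * r t))"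
    by (simp add: prod_eq_iff fst_sum snd_sum)
  ultimately show ?thesis by (simp add: epi_mem)
qed

lemma simplex_convex_comb:
  assumes "u \<in> prob_simplex" "v \<in> prob_simplex" "0 \<le> s" "s \<le> 1"
  shows "(1 - s) *\<^sub>R u + s *\<^sub>R v \<in> prob_simplex"
proof -
  have "0 \<le> ((1 - s) *\<^sub>R u + s *\<^sub>R v)$k" for k
    using assms simplex_nonneg[OF assms(1), of k] simplex_nonneg[OF assms(2), of k] by simp
  moreover have "(\<Sum>k\<in>UNIV. ((1 - s) *\<^sub>R u + s *\<^sub>R v)$k) = 1"
    using simplex_sum[OF assms(1)] simplex_sum[OF assms(2)]
    by (simp add: sum.distrib sum_distrib_left[symmetric])
  ultimately show ?thesis by (simp add: prob_simplex_def)
qed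

lemma posorth_comb:
  assumes "u \<in> prob_simplex" "v \<in> posorth" "0 < s" "s \<le> 1"
  shows "(1 - s) *\<^sub>R u + s *\<^sub>R v \<in> posorth"
proof -
  have "0 < ((1 - s) *\<^sub>R u + s *\<^sub>R v)$k" for k
  proof -
    have "0 \<le> (1 - s) * u$k" using assms simplex_nonneg[OF assms(1), of k] by simp
    moreover have "0 < s * v$k" using assms by (simp add: posorth_def)
    ultimately show ?thesis by simp
  qed
  then show ?thesis by (simp add: posorth_def)
qed

lemma subdiff_finite: "g \<in> subdiff f x \<Longrightarrow> f x = ereal (real_of_ereal (f x))"
  by (cases "f x") (auto simp: subdiff_def)

lemma dom_interior:
  fixes f :: "real^'n::finite \<Rightarrow> ereal"
  assumes cf: "convex_fun f" and xsS: "xs \<in> prob_simplex" and g0: "g0 \<in> subdiff f xs"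
    and bnd: "\<And>g. g \<in> subdiff f xs \<Longrightarrow> (norm g)^2 \<le> M0"
  shows "\<exists>w \<in> prob_simplex \<inter> posorth. f w \<noteq> \<infinity>"
proof (rule ccontr)
  assume nex: "\<not> (\<exists>w \<in> prob_simplex \<inter> posorth. f w \<noteq> \<infinity>)"
  define D where "D = {x. f x \<noteq> \<infinity>}"
  define T where "T = prob_simplex \<inter> (posorth :: (real^'n) set)"
  have fxs: "f xs = ereal (real_of_ereal (f xs))" by (rule subdiff_finite[OF g0])
  have cD: "convex D"
  proof (rule convexI)
    fix x y :: "real^'n" and u v :: real
    assume a: "x \<in> D" "y \<in> D" "0 \<le> u" "0 \<le> v" "u + v = 1"
    have "f x \<le> ereal (real_of_ereal (f x))" using a by (cases "f x") (auto simp: D_def)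
    moreover have "f y \<le> ereal (real_of_ereal (f y))" using a by (cases "f y") (auto simp: D_def)
    ultimately have "f x \<le> ereal (real_of_ereal (f x))" "f y \<le> ereal (real_of_ereal (f y))" by auto
    from cvx2[OF cf this, of v] a have "f ((1 - v) *\<^sub>R x + v *\<^sub>R y) \<le> ereal ((1 - v) * real_of_ereal (f x) + v * real_of_ereal (f y))"
      by simp
    moreover have "1 - v = u" using a by simp
    ultimately show "u *\<^sub>R x + v *\<^sub>R y \<in> D" unfolding D_def by auto
  qed
  have cT: "convex T"
  proof (rule convexI)
    fix x y :: "real^'n" and u v :: real
    assume a: "x \<in> T" "y \<in> T" "0 \<le> u" "0 \<le> v" "u + v = 1"
    have "(1 - v) *\<^sub>R x + v *\<^sub>R y \<in> prob_simplex"
      using a by (intro simplex_convex_comb) (auto simp: T_def)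
    moreover have "(1 - v) *\<^sub>R x + v *\<^sub>R y \<in> posorth"
    proof -
      have "0 < ((1 - v) *\<^sub>R x + v *\<^sub>R y)$k" for k
      proof (cases "v = 0")
        case True then show ?thesis using a by (simp add: T_def posorth_def)
      next
        case False
        then have "0 < v * y$k" using a by (simp add: T_def posorth_def)
        moreover have "0 \<le> (1 - v) * x$k" using a by (simp add: T_def posorth_def less_imp_le)
        ultimately show ?thesis by simp
      qed
      then show ?thesis by (simp add: posorth_def)
    qed
    moreover have "1 - v = u" using a by simp
    ultimately show "u *\<^sub>R x + v *\<^sub>R y \<in> T" by (simp add: T_def)
  qed
  define unif :: "real^'n" where "unif = (\<chi> k. 1 / real CARD('n))"
  have uT: "unif \<in> T" using unif_simplex unfolding T_def unif_def .
  have xsD: "xs \<in> D" unfolding D_def using fxs by (metis mem_Collect_eq PInfty_neq_ereal(1))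
  have disj: "D \<inter> T = {}" using nex by (auto simp: D_def T_def)
  obtain a b where a0: "a \<noteq> 0" and aD: "\<forall>x\<in>D. a \<bullet> x \<le> b" and aT: "\<forall>x\<in>T. b \<le> a \<bullet> x"
    using separating_hyperplane_sets[OF cD cT _ _ disj] xsD uT by blast
  have ab: "a \<bullet> xs = b"
  proof (rule antisym)
    show "a \<bullet> xs \<le> b" using aD xsD by blast
    show "b \<le> a \<bullet> xs"
    proof (rule ccontr)
      assume "\<not> b \<le> a \<bullet> xs"
      then have dpos: "b - a \<bullet> xs > 0" by simp
      define K where "K = \<bar>a \<bullet> (unif - xs)\<bar>"
      define s where "s = min 1 ((b - a \<bullet> xs) / (2 * (K + 1)))"
      have s0: "0 < s" "s \<le> 1" using dpos by (auto simp: s_def K_def)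
      have "(1 - s) *\<^sub>R xs + s *\<^sub>R unif \<in> T"
        using simplex_convex_comb[OF xsS _ less_imp_le[OF s0(1)] s0(2), of unif]
          posorth_comb[OF xsS _ s0, of unif] uT by (auto simp: T_def)
      then have "b \<le> a \<bullet> ((1 - s) *\<^sub>R xs + s *\<^sub>R unif)" using aT by blast
      also have "\<dots> = a \<bullet> xs + s * (a \<bullet> (unif - xs))" by (simp add: inner_diff_right algebra_simps)
      also have "\<dots> \<le> a \<bullet> xs + s * K" using s0 by (intro add_left_mono mult_left_mono) (auto simp: K_def)
      finally have "b - a \<bullet> xs \<le> s * K" by simp
      moreover have "s * K < b - a \<bullet> xs"
      proof -
        have "s \<le> (b - a \<bullet> xs) / (2 * (K + 1))" by (simp add: s_def)
        then have "s * K \<le> (b - a \<bullet> xs) / (2 * (K + 1)) * K" by (intro mult_right_mono) (auto simp: K_def)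
        also have "\<dots> = (b - a \<bullet> xs) * (K / (2 * (K + 1)))" by simp
        also have "\<dots> < (b - a \<bullet> xs) * 1"
        proof (rule mult_strict_left_mono[OF _ dpos])
          have K0: "K \<ge> 0" by (simp add: K_def)
          then show "K / (2 * (K + 1)) < 1" by (simp add: divide_less_eq)
        qed
        also have "\<dots> = b - a \<bullet> xs" by simp
        finally show ?thesis .
      qed
      ultimately show False by simp
    qed
  qed
  have sub: "g0 + c *\<^sub>R a \<in> subdiff f xs" if "c \<ge> 0" for c
  proof -
    have "f y \<ge> f xs + ereal ((g0 + c *\<^sub>R a) \<bullet> (y - xs))" for y
    proof (cases "f y = \<infinity>")
      case True then show ?thesis by simp
    next
      case False
      then have "a \<bullet> y \<le> b" using aD by (simp add: D_def)
      then have "c * (a \<bullet> (y - xs)) \<le> 0" using ab that by (simp add: inner_diff_right mult_nonneg_nonpos)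
      then have "ereal ((g0 + c *\<^sub>R a) \<bullet> (y - xs)) \<le> ereal (g0 \<bullet> (y - xs))"
        by (simp add: inner_add_left)
      then have "f xs + ereal ((g0 + c *\<^sub>R a) \<bullet> (y - xs)) \<le> f xs + ereal (g0 \<bullet> (y - xs))"
        by (rule add_left_mono)
      also have "\<dots> \<le> f y" using g0 by (simp add: subdiff_def)
      finally show ?thesis .
    qed
    then show ?thesis using g0 by (simp add: subdiff_def)
  qed
  define c where "c = (sqrt M0 + norm g0 + 1) / norm a"
  have na: "norm a > 0" using a0 by simp
  have M0nn: "M0 \<ge> 0" using bnd[OF g0] by (metis order_trans zero_le_power2)
  have c0: "c \<ge> 0" unfolding c_def using na M0nn by (intro divide_nonneg_pos add_nonneg_nonneg) auto
  have "norm (c *\<^sub>R a) - norm g0 \<le> norm (g0 + c *\<^sub>R a)"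
    by (metis add.commute norm_diff_ineq diff_minus_eq_add minus_diff_eq norm_minus_commute add_diff_cancel_left' norm_triangle_ineq2)
  moreover have "norm (c *\<^sub>R a) = sqrt M0 + norm g0 + 1"
  proof -
    have "0 \<le> sqrt M0 + norm g0 + 1" using M0nn by simp
    then show ?thesis using na c0 by (simp add: c_def)
  qed
  ultimately have "sqrt M0 + 1 \<le> norm (g0 + c *\<^sub>R a)" by simp
  then have "(sqrt M0 + 1)^2 \<le> (norm (g0 + c *\<^sub>R a))^2"
    using M0nn by (intro power_mono) auto
  moreover have "M0 < (sqrt M0 + 1)^2"
  proof -
    have "(sqrt M0 + 1)^2 = (sqrt M0)^2 + 2 * sqrt M0 + 1" by (simp add: power2_eq_square algebra_simps)
    also have "(sqrt M0)^2 = M0" using M0nn by simp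
    finally show ?thesis using real_sqrt_ge_zero[OF M0nn] by linarith
  qed
  moreover have "(norm (g0 + c *\<^sub>R a))^2 \<le> M0" by (rule bnd[OF sub[OF c0]])
  ultimately show False by simp
qed

lemma negent_comb_coord:
  fixes s a b :: real
  assumes "0 < s" "s < 1" "0 \<le> a" "0 < b"
  shows "((1 - s) * a + s * b) * ln ((1 - s) * a + s * b)
     \<le> (1 - s) * (a * ln a) + s * (b * ln b) + (if a = 0 then s * ln s * b else 0)"
proof (cases "a = 0")
  case True
  have "(s * b) * ln (s * b) = s * (b * ln b) + s * ln s * b"
    using assms by (simp add: ln_mult algebra_simps)
  then show ?thesis using True by simp
next
  case False
  then have "0 < a" using assms by simp
  then show ?thesis using xlnx_convex[of a b s] assms False by simp
qed

lemma prox_core: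
  fixes f :: "real^'n::finite \<Rightarrow> ereal" and b :: "real^'n" and \<kappa> :: real
  assumes cf: "convex_fun f" and pf: "proper_fun f" and kp: "\<kappa> > 0"
    and wS: "w \<in> prob_simplex" and wP: "w \<in> posorth" and fw: "f w \<noteq> \<infinity>"
    and xS: "xp \<in> prob_simplex"
    and mn: "\<And>z. z \<in> prob_simplex \<Longrightarrow> f xp + ereal (xp \<bullet> b + \<kappa> * negent xp) \<le> f z + ereal (z \<bullet> b + \<kappa> * negent z)"
  shows "f xp = ereal (real_of_ereal (f xp)) \<and> xp \<in> posorth \<and>
    (\<forall>z\<in>prob_simplex. f z \<noteq> \<infinity> \<longrightarrow>
        real_of_ereal (f xp) + xp \<bullet> b + \<kappa> * negent xp + \<kappa> * bregman z xp
        \<le> real_of_ereal (f z) + z \<bullet> b + \<kappa> * negent z)"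
proof -
  have nm: "f x \<noteq> -\<infinity>" for x using pf by (simp add: proper_fun_def)
  define Fw where "Fw = real_of_ereal (f w)"
  have fwe: "f w = ereal Fw" unfolding Fw_def using fw nm[of w] by (cases "f w") auto
  have "f xp + ereal (xp \<bullet> b + \<kappa> * negent xp) \<le> ereal Fw + ereal (w \<bullet> b + \<kappa> * negent w)"
    using mn[OF wS] fwe by simp
  then have "f xp \<noteq> \<infinity>" by auto
  define Fx where "Fx = real_of_ereal (f xp)"
  have fxe: "f xp = ereal Fx" unfolding Fx_def using \<open>f xp \<noteq> \<infinity>\<close> nm[of xp] by (cases "f xp") auto
  define A0 where "A0 = Fx + xp \<bullet> b + \<kappa> * negent xp"
  have mnr: "A0 \<le> r + z \<bullet> b + \<kappa> * negent z" if "z \<in> prob_simplex" "f z \<le> ereal r" for z r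
  proof -
    have "ereal Fx + ereal (xp \<bullet> b + \<kappa> * negent xp) \<le> f z + ereal (z \<bullet> b + \<kappa> * negent z)"
      using mn[OF that(1)] fxe by simp
    also have "\<dots> \<le> ereal r + ereal (z \<bullet> b + \<kappa> * negent z)" using that(2) by (rule add_right_mono)
    finally show ?thesis unfolding A0_def by simp
  qed
  have xpos: "xp \<in> posorth"
  proof (rule ccontr)
    assume "xp \<notin> posorth"
    then obtain k0 where k0: "\<not> 0 < xp$k0" by (auto simp: posorth_def)
    then have xk0: "xp$k0 = 0" using simplex_nonneg[OF xS, of k0] by simp
    define W where "W = (\<Sum>k\<in>UNIV. if xp$k = 0 then w$k else 0)"
    have wpos: "\<And>k. 0 < w$k" using wP by (simp add: posorth_def)
    have "w$k0 \<le> W" unfolding W_def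
      using member_le_sum[of k0 UNIV "\<lambda>k. if xp$k = 0 then w$k else 0"] wpos xk0
      by (simp add: less_imp_le)
    then have Wp: "W > 0" using wpos[of k0] by simp
    define A1 where "A1 = Fw + w \<bullet> b + \<kappa> * negent w"
    have key: "A0 \<le> A1 + \<kappa> * W * ln s" if s: "0 < s" "s < 1" for s
    proof -
      define u where "u = (1 - s) *\<^sub>R xp + s *\<^sub>R w"
      have uS: "u \<in> prob_simplex" unfolding u_def using s by (intro simplex_convex_comb[OF xS wS]) auto
      have fu: "f u \<le> ereal ((1 - s) * Fx + s * Fw)"
        unfolding u_def using s by (intro cvx2[OF cf]) (auto simp: fxe fwe)
      have ph: "negent u \<le> (1 - s) * negent xp + s * negent w + s * ln s * W"
      proof -
        have "negent u \<le> (\<Sum>k\<in>UNIV. (1 - s) * (xp$k * ln (xp$k)) + s * (w$k * ln (w$k)) + (if xp$k = 0 then s * ln s * w$k else 0))"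
          unfolding negent_def u_def using s simplex_nonneg[OF xS] wpos
          by (intro sum_mono) (simp add: negent_comb_coord)
        also have "\<dots> = (\<Sum>k\<in>UNIV. (1 - s) * (xp$k * ln (xp$k))) + (\<Sum>k\<in>UNIV. s * (w$k * ln (w$k)))
            + (\<Sum>k\<in>UNIV. (if xp$k = 0 then s * ln s * w$k else 0))"
          by (simp only: sum.distrib)
        also have "(\<Sum>k\<in>UNIV. (1 - s) * (xp$k * ln (xp$k))) = (1 - s) * negent xp"
          by (simp add: negent_def sum_distrib_left)
        also have "(\<Sum>k\<in>UNIV. s * (w$k * ln (w$k))) = s * negent w"
          by (simp add: negent_def sum_distrib_left)
        also have "(\<Sum>k\<in>UNIV. (if xp$k = 0 then s * ln s * w$k else 0)) = s * ln s * W"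
          unfolding W_def sum_distrib_left by (rule sum.cong) auto
        finally show ?thesis .
      qed
      have ub: "u \<bullet> b = (1 - s) * (xp \<bullet> b) + s * (w \<bullet> b)" by (simp add: u_def inner_add_left)
      have "A0 \<le> ((1 - s) * Fx + s * Fw) + u \<bullet> b + \<kappa> * negent u" by (rule mnr[OF uS fu])
      also have "\<dots> \<le> ((1 - s) * Fx + s * Fw) + u \<bullet> b + \<kappa> * ((1 - s) * negent xp + s * negent w + s * ln s * W)"
        using ph kp by simp
      finally have "A0 \<le> (1 - s) * A0 + s * A1 + s * (\<kappa> * W * ln s)"
        unfolding A0_def A1_def ub by (simp add: algebra_simps)
      then have "s * A0 \<le> s * (A1 + \<kappa> * W * ln s)" by (simp add: algebra_simps)
      then show ?thesis using s by simp
    qed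
    define s where "s = exp (- (\<bar>A1 - A0\<bar> + 1) / (\<kappa> * W))"
    have kw: "\<kappa> * W > 0" using kp Wp by simp
    have s0: "0 < s" by (simp add: s_def)
    have lns: "ln s = - (\<bar>A1 - A0\<bar> + 1) / (\<kappa> * W)" by (simp add: s_def)
    have "ln s < 0" using kw lns by (simp add: divide_neg_pos)
    then have s1: "s < 1" using s0 by (simp add: ln_less_zero_iff)
    have "\<kappa> * W * ln s = - (\<bar>A1 - A0\<bar> + 1)" using kw kp Wp unfolding lns by (simp add: field_simps)
    then have "A0 \<le> A1 - (\<bar>A1 - A0\<bar> + 1)" using key[OF s0 s1] by simp
    then show False by linarith
  qed
  have var: "A0 + \<kappa> * bregman z xp \<le> Fz + z \<bullet> b + \<kappa> * negent z"
    if zS: "z \<in> prob_simplex" and fze: "f z = ereal Fz" for z Fz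
  proof -
    have xpp: "\<And>k. 0 < xp$k" using xpos by (simp add: posorth_def)
    define C where "C = (\<Sum>k\<in>UNIV. (z$k - xp$k)^2 / xp$k)"
    have C0: "C \<ge> 0" unfolding C_def
    proof (intro sum_nonneg)
      fix k show "0 \<le> (z$k - xp$k)^2 / xp$k" using xpp[of k] by simp
    qed
    define G where "G = negent_grad xp \<bullet> (z - xp)"
    define D where "D = Fz - Fx + (z - xp) \<bullet> b + \<kappa> * G"
    have step: "0 \<le> D + \<kappa> * s * C" if s: "0 < s" "s \<le> 1" for s
    proof -
      define u where "u = (1 - s) *\<^sub>R xp + s *\<^sub>R z"
      have uS: "u \<in> prob_simplex" unfolding u_def using s by (intro simplex_convex_comb[OF xS zS]) auto
      have fu: "f u \<le> ereal ((1 - s) * Fx + s * Fz)"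
        unfolding u_def using s by (intro cvx2[OF cf]) (auto simp: fxe fze)
      have ux: "u - xp = s *\<^sub>R (z - xp)" by (simp add: u_def algebra_simps)
      have Bu: "bregman u xp \<le> s^2 * C"
      proof -
        have "bregman u xp \<le> (\<Sum>k\<in>UNIV. (u$k - xp$k)^2 / xp$k)"
          by (rule bregman_upper[OF simplex_nonneg[OF uS] xpos])
        also have "\<dots> = s^2 * C"
        proof -
          have e: "(u$k - xp$k)^2 / xp$k = s^2 * ((z$k - xp$k)^2 / xp$k)" for k
          proof -
            have "u$k - xp$k = s * (z$k - xp$k)" using arg_cong[OF ux, of "\<lambda>v. v$k"] by simp
            then show ?thesis by (simp add: power_mult_distrib)
          qed
          show ?thesis unfolding C_def sum_distrib_left e ..
        qed
        finally show ?thesis .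
      qed
      have phu: "negent u = negent xp + s * G + bregman u xp"
        unfolding bregman_def G_def ux by simp
      have "A0 \<le> ((1 - s) * Fx + s * Fz) + u \<bullet> b + \<kappa> * negent u" by (rule mnr[OF uS fu])
      also have "\<dots> \<le> ((1 - s) * Fx + s * Fz) + u \<bullet> b + \<kappa> * (negent xp + s * G + s^2 * C)"
        unfolding phu using Bu kp by simp
      also have "u \<bullet> b = xp \<bullet> b + s * ((z - xp) \<bullet> b)"
        using arg_cong[OF ux, of "\<lambda>v. v \<bullet> b"] by (simp add: inner_diff_left)
      finally have "0 \<le> s * D + s * (\<kappa> * s * C)"
        unfolding A0_def D_def by (simp add: algebra_simps power2_eq_square)
      then have "0 \<le> s * (D + \<kappa> * s * C)" by (simp add: algebra_simps)
      then show ?thesis using s by (simp add: zero_le_mult_iff)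
    qed
    have D0: "0 \<le> D"
    proof (rule ccontr)
      assume "\<not> 0 \<le> D"
      then have Dn: "D < 0" by simp
      obtain q where q: "q = \<kappa> * C" by simp
      have kc: "q \<ge> 0" using kp C0 q by simp
      define s where "s = min 1 (- D / (2 * (q + 1)))"
      have qp: "0 < 2 * (q + 1)" using kc by simp
      have "0 < - D / (2 * (q + 1))" using Dn qp by (intro divide_pos_pos) auto
      then have s0: "0 < s" "s \<le> 1" by (auto simp: s_def)
      have "\<kappa> * s * C = s * q" using q by simp
      also have "\<dots> \<le> (- D / (2 * (q + 1))) * q"
        using kc by (intro mult_right_mono) (auto simp: s_def)
      also have "\<dots> = (- D) * (q / (2 * (q + 1)))" by simp
      also have "\<dots> < (- D) * 1"
      proof (rule mult_strict_left_mono)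
        have "q < 2 * (q + 1)" using kc by simp
        then show "q / (2 * (q + 1)) < 1" by (simp only: divide_less_eq_1_pos[OF qp])
      qed (use Dn in simp)
      finally have "D + \<kappa> * s * C < 0" by simp
      then show False using step[OF s0] by simp
    qed
    have "Fz + z \<bullet> b + \<kappa> * negent z - (A0 + \<kappa> * bregman z xp) = D"
      unfolding A0_def D_def G_def bregman_def by (simp add: algebra_simps inner_diff_left)
    then show ?thesis using D0 by simp
  qed
  show ?thesis
  proof (intro conjI ballI impI)
    show "f xp = ereal (real_of_ereal (f xp))" using fxe by simp
    show "xp \<in> posorth" by (rule xpos)
  next
    fix z assume zS: "z \<in> prob_simplex" and fz: "f z \<noteq> \<infinity>"
    have fze: "f z = ereal (real_of_ereal (f z))" using fz nm[of z] by (cases "f z") auto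
    show "real_of_ereal (f xp) + xp \<bullet> b + \<kappa> * negent xp + \<kappa> * bregman z xp
        \<le> real_of_ereal (f z) + z \<bullet> b + \<kappa> * negent z"
      using var[OF zS fze] unfolding A0_def Fx_def by simp
  qed
qed

lemma ereal_shift:
  fixes a b :: ereal
  assumes "a + ereal (r + c) \<le> b + ereal (t + c)"
  shows "a + ereal r \<le> b + ereal t"
  using assms by (cases a; cases b) auto

lemma bregman_lin: "bregman z y = negent z - negent_grad y \<bullet> z + (negent_grad y \<bullet> y - negent y)"
  by (simp add: bregman_def inner_diff_right)

lemma xstep:
  fixes f :: "real^'n::finite \<Rightarrow> ereal"
  assumes cf: "convex_fun f" and pf: "proper_fun f" and rp: "\<rho> > 0" and dp: "\<delta> \<ge> 0"
    and wS: "w \<in> prob_simplex" and wP: "w \<in> posorth" and fw: "f w \<noteq> \<infinity>"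
    and xS: "xp \<in> prob_simplex"
    and mn: "\<forall>z\<in>prob_simplex. f xp + ereal (xp \<bullet> a + \<rho> * bregman xp yv + \<delta> * bregman xp x0)
                 \<le> f z + ereal (z \<bullet> a + \<rho> * bregman z yv + \<delta> * bregman z x0)"
  shows "f xp = ereal (real_of_ereal (f xp)) \<and> xp \<in> posorth \<and>
    (\<forall>z\<in>prob_simplex. f z \<noteq> \<infinity> \<longrightarrow>
        real_of_ereal (f xp) + (xp \<bullet> a + \<rho> * bregman xp yv + \<delta> * bregman xp x0) + (\<rho> + \<delta>) * bregman z xp
        \<le> real_of_ereal (f z) + (z \<bullet> a + \<rho> * bregman z yv + \<delta> * bregman z x0))"
proof -
  define b where "b = a - \<rho> *\<^sub>R negent_grad yv - \<delta> *\<^sub>R negent_grad x0"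
  define c0 where "c0 = \<rho> * (negent_grad yv \<bullet> yv - negent yv) + \<delta> * (negent_grad x0 \<bullet> x0 - negent x0)"
  have obj: "z \<bullet> a + \<rho> * bregman z yv + \<delta> * bregman z x0 = (z \<bullet> b + (\<rho> + \<delta>) * negent z) + c0" for z
  proof -
    have zb: "z \<bullet> b = z \<bullet> a - \<rho> * (negent_grad yv \<bullet> z) - \<delta> * (negent_grad x0 \<bullet> z)"
      unfolding b_def by (simp add: inner_diff_right inner_commute[of z])
    show ?thesis unfolding bregman_lin zb c0_def by (simp add: algebra_simps)
  qed
  have mn2: "f xp + ereal (xp \<bullet> b + (\<rho> + \<delta>) * negent xp) \<le> f z + ereal (z \<bullet> b + (\<rho> + \<delta>) * negent z)"
    if "z \<in> prob_simplex" for z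
  proof (rule ereal_shift[where c = c0])
    have "f xp + ereal (xp \<bullet> a + \<rho> * bregman xp yv + \<delta> * bregman xp x0)
                 \<le> f z + ereal (z \<bullet> a + \<rho> * bregman z yv + \<delta> * bregman z x0)" using mn that by blast
    then show "f xp + ereal (xp \<bullet> b + (\<rho> + \<delta>) * negent xp + c0) \<le> f z + ereal (z \<bullet> b + (\<rho> + \<delta>) * negent z + c0)"
      by (simp only: obj)
  qed
  have kp: "\<rho> + \<delta> > 0" using rp dp by simp
  have pc: "f xp = ereal (real_of_ereal (f xp)) \<and> xp \<in> posorth \<and>
    (\<forall>z\<in>prob_simplex. f z \<noteq> \<infinity> \<longrightarrow>
        real_of_ereal (f xp) + xp \<bullet> b + (\<rho> + \<delta>) * negent xp + (\<rho> + \<delta>) * bregman z xp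
        \<le> real_of_ereal (f z) + z \<bullet> b + (\<rho> + \<delta>) * negent z)"
    by (rule prox_core[OF cf pf kp wS wP fw xS mn2])
  show ?thesis
  proof (intro conjI ballI impI)
    show "f xp = ereal (real_of_ereal (f xp))" "xp \<in> posorth" using pc by auto
  next
    fix z assume z: "z \<in> prob_simplex" "f z \<noteq> \<infinity>"
    then have "real_of_ereal (f xp) + xp \<bullet> b + (\<rho> + \<delta>) * negent xp + (\<rho> + \<delta>) * bregman z xp
        \<le> real_of_ereal (f z) + z \<bullet> b + (\<rho> + \<delta>) * negent z" using pc by blast
    then show "real_of_ereal (f xp) + (xp \<bullet> a + \<rho> * bregman xp yv + \<delta> * bregman xp x0) + (\<rho> + \<delta>) * bregman z xp
        \<le> real_of_ereal (f z) + (z \<bullet> a + \<rho> * bregman z yv + \<delta> * bregman z x0)"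
      unfolding obj by linarith
  qed
qed

lemma ystep:
  fixes x :: "'m::finite \<Rightarrow> real^'n::finite" and p :: "'m \<Rightarrow> real"
  assumes p0: "\<And>j. 0 \<le> p j" and p1: "(\<Sum>j\<in>UNIV. p j) = 1"
    and xS: "\<And>j. x j \<in> prob_simplex" and xP: "\<And>j. x j \<in> posorth"
    and yS: "yv \<in> prob_simplex"
    and mn: "\<forall>z\<in>prob_simplex. (\<Sum>j\<in>UNIV. p j * bregman yv (x j)) \<le> (\<Sum>j\<in>UNIV. p j * bregman z (x j))"
  shows "yv \<in> posorth \<and> (\<forall>z\<in>prob_simplex. (\<Sum>j\<in>UNIV. p j * bregman z (x j)) = bregman z yv + (\<Sum>j\<in>UNIV. p j * bregman yv (x j)))"
proof -
  define q where "q = (\<Sum>j\<in>UNIV. p j *\<^sub>R negent_grad (x j))"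
  define K where "K = (\<Sum>j\<in>UNIV. p j * (negent_grad (x j) \<bullet> x j - negent (x j)))"
  define Z where "Z = (\<Sum>k\<in>UNIV. exp (q$k))"
  have Z0: "Z > 0" unfolding Z_def by (intro sum_pos) auto
  define yh :: "real^'n" where "yh = (\<chi> k. exp (q$k) / Z)"
  have yhS: "yh \<in> prob_simplex"
    using Z0 by (simp add: prob_simplex_def yh_def sum_divide_distrib[symmetric] Z_def)
  have yhP: "yh \<in> posorth" using Z0 by (simp add: posorth_def yh_def)
  have gyh: "negent_grad yh = q + (1 - ln Z) *\<^sub>R onesv"
    using Z0 by (simp add: negent_grad_def yh_def vec_eq_iff ln_div)
  define Obj where "Obj z = (\<Sum>j\<in>UNIV. p j * bregman z (x j))" for z :: "real^'n"
  have objf: "Obj z = negent z - q \<bullet> z + K" for z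
  proof -
    have "Obj z = (\<Sum>j\<in>UNIV. p j * negent z - p j * (negent_grad (x j) \<bullet> z) + p j * (negent_grad (x j) \<bullet> x j - negent (x j)))"
      unfolding Obj_def bregman_lin by (simp add: algebra_simps)
    also have "\<dots> = (\<Sum>j\<in>UNIV. p j) * negent z - q \<bullet> z + K"
      by (simp add: sum.distrib sum_subtractf sum_distrib_right q_def K_def inner_sum_left)
    finally show ?thesis using p1 by simp
  qed
  have on: "onesv \<bullet> z = 1" if "z \<in> prob_simplex" for z :: "real^'n"
    using simplex_sum[OF that] by (simp add: onesv_inner)
  have pyth: "Obj z = Obj yh + bregman z yh" if zS: "z \<in> prob_simplex" for z
  proof -
    have "bregman z yh = negent z - negent yh - (q + (1 - ln Z) *\<^sub>R onesv) \<bullet> (z - yh)"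
      by (simp add: bregman_def gyh)
    also have "(q + (1 - ln Z) *\<^sub>R onesv) \<bullet> (z - yh) = q \<bullet> (z - yh)"
      using on[OF zS] on[OF yhS] by (simp add: inner_add_left inner_diff_right)
    finally show ?thesis unfolding objf by (simp add: inner_diff_right)
  qed
  have "Obj yv \<le> Obj yh" using mn yhS unfolding Obj_def by blast
  then have "bregman yv yh \<le> 0" using pyth[OF yS] by simp
  moreover have "(norm (yv - yh))^2 / 2 \<le> bregman yv yh" by (rule bregman_lower[OF yS yhS yhP])
  ultimately have "(norm (yv - yh))^2 \<le> 0" by linarith
  then have "norm (yv - yh) = 0" by simp
  then have yeq: "yv = yh" by simp
  show ?thesis
  proof (intro conjI ballI)
    show "yv \<in> posorth" using yeq yhP by simp
  next
    fix z :: "real^'n" assume "z \<in> prob_simplex"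
    then show "(\<Sum>j\<in>UNIV. p j * bregman z (x j)) = bregman z yv + (\<Sum>j\<in>UNIV. p j * bregman yv (x j))"
      using pyth yeq unfolding Obj_def by simp
  qed
qed

lemma ip_lap_sym:
  assumes "symmetric_mat (P::real^'m::finite^'m)"
  shows "ip (\<lambda>i. u i - mix P u i) v = ip u (\<lambda>i. v i - mix P v i)"
  using ip_mix_sym[OF assms, of u v] by (simp add: ip_diff_left ip_diff_right)

lemma lap_shift:
  assumes "stochastic_mat (P::real^'m::finite^'m)"
  shows "(\<lambda>i. (u i - c) - mix P (\<lambda>i. u i - c) i) = (\<lambda>i. u i - mix P u i)"
proof -
  have "mix P (\<lambda>i. u i - c) = (\<lambda>i. mix P u i - mix P (\<lambda>i. c) i)" by (rule mix_diff)
  also have "mix P (\<lambda>i. c) = (\<lambda>i. c)" by (rule mix_const[OF assms])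
  finally show ?thesis by (simp add: algebra_simps)
qed

lemma sum_shift: "(\<Sum>t\<in>{1..T}. g t) = (\<Sum>t<T. g (Suc t))"
  by (induct T) auto

lemma ip_expand:
  "ip (\<lambda>i. a i + c *\<^sub>R r i) (\<lambda>i. a i + c *\<^sub>R r i) = ip a a + 2 * c * ip a r + c^2 * ip r r"
  unfolding ip_def by (simp add: inner_add_left inner_add_right inner_commute[of "r _" "a _"]
      sum.distrib sum_distrib_left power2_eq_square algebra_simps)

lemma parallelogram:
  "ip (\<lambda>i. a i + b i) (\<lambda>i. a i + b i) \<le> 2 * ip a a + 2 * ip b b"
proof -
  have "0 \<le> ip (\<lambda>i. a i - b i) (\<lambda>i. a i - b i)" by (rule ip_self_nonneg)
  also have "\<dots> = ip a a - 2 * ip a b + ip b b"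
    by (simp add: ip_diff_left ip_diff_right ip_comm[of b a])
  finally have "2 * ip a b \<le> ip a a + ip b b" by simp
  moreover have "ip (\<lambda>i. a i + b i) (\<lambda>i. a i + b i) = ip a a + 2 * ip a b + ip b b"
    by (simp add: ip_add_left ip_add_right ip_comm[of b a])
  ultimately show ?thesis by simp
qed

lemma lap_bound_simplex:
  assumes st: "stochastic_mat (P::real^'m::finite^'m)" and vS: "\<And>i. v i \<in> prob_simplex"
  shows "ip (\<lambda>i. v i - mix P v i) (\<lambda>i. v i - mix P v i) \<le> 2 * real CARD('m)"
proof -
  have rs: "(\<Sum>j\<in>UNIV. P$i$j) = 1" "\<And>j. 0 \<le> P$i$j" for i using st by (auto simp: stochastic_mat_def)
  have each: "(v i - mix P v i) \<bullet> (v i - mix P v i) \<le> 2" for i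
  proof -
    have e: "v i - mix P v i = (\<Sum>j\<in>UNIV. P$i$j *\<^sub>R (v i - v j))"
    proof -
      have "v i = (\<Sum>j\<in>UNIV. P$i$j) *\<^sub>R v i" using rs(1)[of i] by simp
      also have "\<dots> = (\<Sum>j\<in>UNIV. P$i$j *\<^sub>R v i)" by (rule scaleR_sum_left)
      finally show ?thesis by (simp add: mix_def scaleR_diff_right sum_subtractf)
    qed
    have "(v i - mix P v i) \<bullet> (v i - mix P v i) \<le> (\<Sum>j\<in>UNIV. P$i$j * ((v i - v j) \<bullet> (v i - v j)))"
      unfolding e by (rule jensen_vec) (use rs in auto)
    also have "\<dots> \<le> (\<Sum>j\<in>UNIV. P$i$j * 2)"
    proof (rule sum_mono)
      fix j
      have "(v i - v j) \<bullet> (v i - v j) = (norm (v i - v j))^2" by (simp add: power2_norm_eq_inner)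
      also have "\<dots> \<le> 2" by (rule simplex_dist2[OF vS vS])
      finally show "P$i$j * ((v i - v j) \<bullet> (v i - v j)) \<le> P$i$j * 2"
        using rs(2)[of i j] by (intro mult_left_mono) auto
    qed
    also have "\<dots> = 2" using rs(1)[of i] by (simp add: sum_distrib_right[symmetric])
    finally show ?thesis .
  qed
  have "ip (\<lambda>i. v i - mix P v i) (\<lambda>i. v i - mix P v i) \<le> (\<Sum>i\<in>(UNIV::'m set). (2::real))"
    unfolding ip_def by (rule sum_mono) (rule each)
  then show ?thesis by simp
qed

lemma simplex_n1:
  assumes "CARD('n::finite) = 1" "(u::real^'n) \<in> prob_simplex" "v \<in> prob_simplex"
  shows "u = v"
proof -
  obtain k0 :: 'n where eq: "(UNIV::'n set) = {k0}" using assms(1) card_1_singletonE by blast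
  have "(\<Sum>k\<in>UNIV. u$k) = (\<Sum>k\<in>{k0}. u$k)" "(\<Sum>k\<in>UNIV. v$k) = (\<Sum>k\<in>{k0}. v$k)"
    by (simp_all only: eq)
  then have "u$k0 = 1" "v$k0 = 1" using simplex_sum[OF assms(2)] simplex_sum[OF assms(3)] by auto
  moreover have kk: "k = k0" for k using eq by auto
  ultimately show ?thesis unfolding vec_eq_iff by (metis kk)
qed

lemma subgrad_ineq:
  assumes "g \<in> subdiff f x" "f y = ereal Fy" "f x = ereal Fx"
  shows "Fx + g \<bullet> (y - x) \<le> Fy"
proof -
  have "f y \<ge> f x + ereal (g \<bullet> (y - x))" using assms(1) by (simp add: subdiff_def)
  then show ?thesis using assms(2,3) by simp
qed

lemma final_arith:
  fixes R N E \<tau> T \<kappa> L Q :: real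
  assumes tp: "\<tau> > 0" and T2: "T \<ge> 2" and R0: "R \<ge> 0" and N0: "N \<ge> 0" and E0: "E \<ge> 0"
    and h: "\<kappa> * R \<le> (E + (2 * N + 2 * \<kappa>^2 * R) / (2 * \<tau>)) / T" and k: "\<kappa> = \<tau> * T / 2"
    and hN: "N \<le> L" and hE: "E \<le> Q"
  shows "R / 2 \<le> L / (\<tau>^2 * T) + 2 * Q / (\<tau> * T)"
proof -
  have Tp: "T > 0" using T2 by simp
  have "\<kappa> * R * T \<le> E + (2 * N + 2 * \<kappa>^2 * R) / (2 * \<tau>)" using h Tp by (simp add: le_divide_eq)
  then have "\<kappa> * R * T * \<tau> \<le> E * \<tau> + N + \<kappa>^2 * R" using tp by (simp add: field_simps)
  then have "(\<tau>^2 * T^2 / 4) * R \<le> E * \<tau> + N" unfolding k by (simp add: power2_eq_square field_simps)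
  then have a: "R \<le> 4 * (E * \<tau> + N) / (\<tau>^2 * T^2)" using tp Tp by (simp add: field_simps)
  have "R / 2 \<le> 2 * (E * \<tau> + N) / (\<tau>^2 * T^2)" using a by simp
  also have "\<dots> = 2 * E / (\<tau> * T^2) + 2 * N / (\<tau>^2 * T^2)" using tp Tp by (simp add: field_simps power2_eq_square)
  also have "2 * E / (\<tau> * T^2) \<le> 2 * Q / (\<tau> * T)"
  proof -
    have "2 * E / (\<tau> * T^2) = (2 * E / (\<tau> * T)) / T" by (simp add: power2_eq_square)
    also have "\<dots> \<le> (2 * E / (\<tau> * T)) / 1"
      by (rule divide_left_mono) (use T2 E0 tp in auto)
    also have "\<dots> \<le> 2 * Q / (\<tau> * T)" using hE tp Tp by (simp add: divide_right_mono)
    finally show ?thesis .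
  qed
  also have "2 * N / (\<tau>^2 * T^2) \<le> L / (\<tau>^2 * T)"
  proof -
    have "2 * N / (\<tau>^2 * T^2) = (2 / T) * (N / (\<tau>^2 * T))" by (simp add: power2_eq_square)
    also have "\<dots> \<le> 1 * (N / (\<tau>^2 * T))"
      using T2 N0 tp by (intro mult_right_mono) auto
    also have "\<dots> \<le> L / (\<tau>^2 * T)" using hN tp Tp by (simp add: divide_right_mono)
    finally show ?thesis .
  qed
  finally show ?thesis by simp
qed

lemma ln_ge_quarter:
  assumes "n \<ge> (2::real)"
  shows "ln n \<ge> 1/4"
proof -
  have "exp (1/4::real) \<le> 2"
  proof -
    have "exp (1/4::real) ^ 4 = exp 1" by (simp add: exp_of_nat_mult[symmetric])
    moreover have "exp (1::real) \<le> 3" using exp_le by simp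
    ultimately have "exp (1/4::real) ^ 4 \<le> 2 ^ 4" by simp
    then show ?thesis using power_mono_iff[of "exp (1/4::real)" 2 4] by simp
  qed
  then have "exp (1/4::real) \<le> n" using assms by simp
  then show ?thesis using assms by (metis exp_le_cancel_iff exp_ln less_le_trans zero_less_numeral ln_exp dual_order.trans exp_gt_zero ln_le_cancel_iff)
qed

theorem corollary1:
  fixes E :: "'m::finite \<Rightarrow> 'm \<Rightarrow> bool"
    and P :: "real^'m^'m"
    and f :: "'m \<Rightarrow> real^'n::finite \<Rightarrow> ereal"
    and xs nus :: "'m \<Rightarrow> real^'n"
    and mu p M0 rho tau gamma :: real
    and delta :: "'m \<Rightarrow> real"
    and y x nu :: "nat \<Rightarrow> 'm \<Rightarrow> real^'n"
    and T :: nat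
  assumes m2: "CARD('m) \<ge> 2"
    and graph: "undirected_graph E" "connected_graph E"
    and f_cpc: "\<And>i. closed_fun (f i) \<and> proper_fun (f i) \<and> convex_fun (f i)"
    and kkt: "\<And>i. (\<Sum>j\<in>UNIV. P$i$j *\<^sub>R xs j) = xs i"
             "\<And>i. \<exists>g\<in>normal_cone prob_simplex (xs i).
                      - nus i + (\<Sum>j\<in>UNIV. P$i$j *\<^sub>R nus j) - g \<in> subdiff (f i) (xs i)"
    and breg_sc: "mu > 0" "p \<ge> 1"
      "\<And>u v :: real^'n. u \<in> prob_simplex \<inter> posorth \<Longrightarrow> v \<in> prob_simplex \<inter> posorth \<Longrightarrow>
               bregman u v \<ge> mu / 2 * (pnorm p (u - v))\<^sup>2"
    and P_props: "symmetric_mat P" "stochastic_mat P" "irreducible_mat P" "psd_mat P"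
      "\<And>i j. P$i$j > 0 \<Longrightarrow> j = i \<or> j \<in> neighbors E i"
    and M0: "M0 \<ge> 0" "\<And>i g. g \<in> subdiff (f i) (xs i) \<Longrightarrow> (norm g)\<^sup>2 \<le> M0"
    and params: "rho > 0" "tau = rho / 2" "gamma = 1/4" "\<And>i. delta i \<ge> 0"
    and init: "nu 0 = (\<lambda>i. 0)" "x 0 = (\<lambda>i. \<chi> k. 1 / real CARD('n))"
    and y_step: "\<And>t i. y t i \<in> prob_simplex \<and>
        (\<forall>z\<in>prob_simplex. (\<Sum>j\<in>UNIV. P$i$j * bregman (y t i) (x t j))
                      \<le> (\<Sum>j\<in>UNIV. P$i$j * bregman z (x t j)))"
    and x_step: "\<And>t i. x (Suc t) i \<in> prob_simplex \<and>
        (\<forall>z\<in>prob_simplex.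
           f i (x (Suc t) i) + ereal (x (Suc t) i \<bullet> (nu t i - (\<Sum>j\<in>UNIV. P$i$j *\<^sub>R nu t j))
              + rho * bregman (x (Suc t) i) (y t i) + delta i * bregman (x (Suc t) i) (x t i))
           \<le> f i z + ereal (z \<bullet> (nu t i - (\<Sum>j\<in>UNIV. P$i$j *\<^sub>R nu t j))
              + rho * bregman z (y t i) + delta i * bregman z (x t i)))"
    and nu_step: "\<And>t i. nu (Suc t) i = nu t i + tau *\<^sub>R x (Suc t) i
                           - tau *\<^sub>R (\<Sum>j\<in>UNIV. P$i$j *\<^sub>R x (Suc t) j)"
    and T: "T \<ge> 1"
  shows
    "let xbar = (\<lambda>i. (1 / real T) *\<^sub>R (\<Sum>t=1..T. x t i));
         dmax = Max (range delta); m = real CARD('m); n = real CARD('n)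
     in (\<Sum>i\<in>UNIV. f i (xbar i)) - (\<Sum>i\<in>UNIV. f i (xs i))
          \<le> ereal (m * (rho + dmax) * ln n / real T)
      \<and> 1/2 * (\<Sum>i\<in>UNIV. (norm (xbar i - (\<Sum>j\<in>UNIV. P$i$j *\<^sub>R xbar j)))\<^sup>2)
          \<le> 4 * m * M0 / (rho\<^sup>2 * (1 - lambda2 P)\<^sup>2 * real T)
            + 4 * m * (rho + dmax) * ln n / (rho * real T)"
proof -
  note sym = P_props(1) and st = P_props(2) and irr = P_props(3) and psd = P_props(4)
  have rs: "\<And>i. (\<Sum>j\<in>UNIV. P$i$j) = 1" and nn: "\<And>i j. 0 \<le> P$i$j"
    using st by (auto simp: stochastic_mat_def)
  have cs: "\<And>j. (\<Sum>i\<in>UNIV. P$i$j) = 1" using colsum[OF sym st] .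
  have cf: "\<And>i. convex_fun (f i)" and pf: "\<And>i. proper_fun (f i)" using f_cpc by auto
  have "\<forall>i. \<exists>g. g \<in> normal_cone prob_simplex (xs i) \<and> (- nus i + (\<Sum>j\<in>UNIV. P$i$j *\<^sub>R nus j) - g) \<in> subdiff (f i) (xs i)"
    using kkt(2) by blast
  then obtain gN where gN: "\<And>i. gN i \<in> normal_cone prob_simplex (xs i)"
    "\<And>i. (- nus i + (\<Sum>j\<in>UNIV. P$i$j *\<^sub>R nus j) - gN i) \<in> subdiff (f i) (xs i)" by metis
  define h where "h i = - nus i + (\<Sum>j\<in>UNIV. P$i$j *\<^sub>R nus j) - gN i" for i
  have hsub: "\<And>i. h i \<in> subdiff (f i) (xs i)" using gN(2) by (simp add: h_def)
  have xsS: "\<And>i. xs i \<in> prob_simplex"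
  proof (rule ccontr)
    fix i assume "xs i \<notin> prob_simplex"
    then show False using gN(1)[of i] by (simp add: normal_cone_def)
  qed
  obtain i0 :: 'm where True by simp
  define c where "c = xs i0"
  have xsc: "\<And>i. xs i = c"
  proof -
    fix i
    have "xs i $ k = xs i0 $ k" for k
    proof (rule max_principle[OF st irr, of "\<lambda>i. xs i $ k"])
      fix i
      have "(\<Sum>j\<in>UNIV. P$i$j *\<^sub>R xs j) $ k = xs i $ k" using kkt(1)[of i] by simp
      then show "(\<Sum>j\<in>UNIV. P$i$j * xs j $ k) = xs i $ k" by (simp add: sum_component)
    qed
    then show "xs i = c" by (simp add: c_def vec_eq_iff)
  qed
  have cS: "c \<in> prob_simplex" using xsS[of i0] by (simp add: c_def)
  have hsubc: "\<And>i. h i \<in> subdiff (f i) c" using hsub xsc by metis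
  have gNc: "\<And>i. gN i \<in> normal_cone prob_simplex c" using gN(1) xsc by metis
  define F where "F i v = real_of_ereal (f i v)" for i v
  have fc: "\<And>i. f i c = ereal (F i c)" unfolding F_def using subdiff_finite[OF hsubc] .
  have "\<forall>i. \<exists>w. w \<in> prob_simplex \<inter> posorth \<and> f i w \<noteq> \<infinity>"
  proof
    fix i
    show "\<exists>w. w \<in> prob_simplex \<inter> posorth \<and> f i w \<noteq> \<infinity>"
    proof (rule dom_interior[where f="f i" and xs="xs i" and ?g0.0="h i" and ?M0.0=M0, THEN bexE])
      show "convex_fun (f i)" by (rule cf)
      show "xs i \<in> prob_simplex" by (rule xsS)
      show "h i \<in> subdiff (f i) (xs i)" by (rule hsub)
      show "\<And>g. g \<in> subdiff (f i) (xs i) \<Longrightarrow> (norm g)^2 \<le> M0" by (rule M0(2))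
    qed blast
  qed
  then obtain wv where wv: "\<And>i. wv i \<in> prob_simplex" "\<And>i. wv i \<in> posorth" "\<And>i. f i (wv i) \<noteq> \<infinity>"
    by (metis IntD1 IntD2)
  have xst: "f i (x (Suc t) i) = ereal (F i (x (Suc t) i)) \<and> x (Suc t) i \<in> posorth \<and>
    (\<forall>z\<in>prob_simplex. f i z \<noteq> \<infinity> \<longrightarrow>
        F i (x (Suc t) i) + (x (Suc t) i \<bullet> (nu t i - (\<Sum>j\<in>UNIV. P$i$j *\<^sub>R nu t j)) + rho * bregman (x (Suc t) i) (y t i) + delta i * bregman (x (Suc t) i) (x t i)) + (rho + delta i) * bregman z (x (Suc t) i)
        \<le> F i z + (z \<bullet> (nu t i - (\<Sum>j\<in>UNIV. P$i$j *\<^sub>R nu t j)) + rho * bregman z (y t i) + delta i * bregman z (x t i)))" for t i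
    unfolding F_def
    by (rule xstep[OF cf pf params(1) params(4) wv(1) wv(2) wv(3)]) (use x_step[of t i] in auto)
  have xS: "\<And>t i. x t i \<in> prob_simplex"
  proof -
    fix t i show "x t i \<in> prob_simplex"
      by (cases t) (use init(2) unif_simplex x_step in auto)
  qed
  have xP: "\<And>t i. x t i \<in> posorth"
  proof -
    fix t i show "x t i \<in> posorth"
      by (cases t) (use init(2) unif_simplex xst in auto)
  qed
  have yst: "y t i \<in> posorth \<and> (\<forall>z\<in>prob_simplex. (\<Sum>j\<in>UNIV. P$i$j * bregman z (x t j)) = bregman z (y t i) + (\<Sum>j\<in>UNIV. P$i$j * bregman (y t i) (x t j)))" for t i
    by (rule ystep[of "\<lambda>j. P$i$j"]) (use nn rs xS xP y_step[of t i] in auto)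
  have fxe: "\<And>t i. f i (x (Suc t) i) = ereal (F i (x (Suc t) i))" using xst by blast
  define lap where "lap v = (\<lambda>i. v i - mix P v i)" for v :: "'m \<Rightarrow> real^'n"
  define E where "E t = (\<Sum>i\<in>UNIV. (rho + delta i) * bregman c (x t i))" for t
  have tau0: "tau > 0" using params(1,2) by simp
  have Enn: "E t \<ge> 0" for t
    unfolding E_def using params(1,4) by (intro sum_nonneg mult_nonneg_nonneg bregman_nonneg[OF cS xS xP]) (auto intro: add_nonneg_nonneg less_imp_le)
  have peri: "(F i (x (Suc t) i) - F i c) + (x (Suc t) i - c) \<bullet> (nu t i - mix P (nu t) i)
      + rho * ((\<Sum>j\<in>UNIV. P$i$j * ((x (Suc t) i - x t j) \<bullet> (x (Suc t) i - x t j))) / 2)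
      + (rho + delta i) * bregman c (x (Suc t) i)
    \<le> rho * (\<Sum>j\<in>UNIV. P$i$j * bregman c (x t j)) + delta i * bregman c (x t i)" for t i
  proof -
    let ?X' = "x (Suc t) i" and ?Y = "y t i" and ?a = "nu t i - mix P (nu t) i"
    have e1: "F i ?X' + (?X' \<bullet> ?a + rho * bregman ?X' ?Y + delta i * bregman ?X' (x t i)) + (rho + delta i) * bregman c ?X'
        \<le> F i c + (c \<bullet> ?a + rho * bregman c ?Y + delta i * bregman c (x t i))"
      using xst[of i t] cS fc[of i] by (simp add: mix_def)
    define S where "S = (\<Sum>j\<in>UNIV. P$i$j * bregman ?Y (x t j))"
    define SPc where "SPc = (\<Sum>j\<in>UNIV. P$i$j * bregman c (x t j))"
    define SPx where "SPx = (\<Sum>j\<in>UNIV. P$i$j * bregman ?X' (x t j))"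
    define CS where "CS = (\<Sum>j\<in>UNIV. P$i$j * ((?X' - x t j) \<bullet> (?X' - x t j)))"
    have hc: "bregman c ?Y = SPc - S" using yst[of t i] cS by (simp add: SPc_def S_def)
    have hx: "bregman ?X' ?Y = SPx - S" using yst[of t i] xS[of "Suc t" i] by (simp add: SPx_def S_def)
    have dX: "0 \<le> delta i * bregman ?X' (x t i)"
      using params(4)[of i] bregman_nonneg[OF xS xS xP] by simp
    have lx: "CS / 2 \<le> SPx"
      unfolding CS_def SPx_def sum_divide_distrib
    proof (rule sum_mono)
      fix j
      have "(norm (?X' - x t j))^2 / 2 \<le> bregman ?X' (x t j)" by (rule bregman_lower[OF xS xS xP])
      then have "((?X' - x t j) \<bullet> (?X' - x t j)) / 2 \<le> bregman ?X' (x t j)" by (simp add: power2_norm_eq_inner)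
      then have "P$i$j * (((?X' - x t j) \<bullet> (?X' - x t j)) / 2) \<le> P$i$j * bregman ?X' (x t j)"
        using nn[of i j] by (rule mult_left_mono)
      then show "P$i$j * ((?X' - x t j) \<bullet> (?X' - x t j)) / 2 \<le> P$i$j * bregman ?X' (x t j)"
        by simp
    qed
    have rl: "rho * (CS / 2) \<le> rho * SPx" using lx params(1) by simp
    have m1: "rho * bregman c ?Y = rho * SPc - rho * S" by (simp add: hc right_diff_distrib)
    have m2: "rho * bregman ?X' ?Y = rho * SPx - rho * S" by (simp add: hx right_diff_distrib)
    have ia: "(?X' - c) \<bullet> ?a = ?X' \<bullet> ?a - c \<bullet> ?a" by (simp add: inner_diff_left)
    show ?thesis
      unfolding CS_def[symmetric] SPc_def[symmetric] ia using e1 m1 m2 dX rl by linarith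
  qed
  have step: "2 * tau * ((\<Sum>i\<in>UNIV. F i (x (Suc t) i) - F i c) + ip (lap (x (Suc t))) V + E (Suc t))
      + ip (\<lambda>i. nu (Suc t) i - V i) (\<lambda>i. nu (Suc t) i - V i)
    \<le> 2 * tau * E t + ip (\<lambda>i. nu t i - V i) (\<lambda>i. nu t i - V i)" for t V
  proof -
    define X' where "X' = x (Suc t)"
    define r where "r = lap X'"
    define N where "N = nu t"
    define A where "A = (\<lambda>i. N i - V i)"
    define CS where "CS i = (\<Sum>j\<in>UNIV. P$i$j * ((X' i - x t j) \<bullet> (X' i - x t j)))" for i
    have sumi: "(\<Sum>i\<in>UNIV. (F i (X' i) - F i c) + (X' i - c) \<bullet> (N i - mix P N i) + rho * (CS i / 2) + (rho + delta i) * bregman c (X' i))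
        \<le> (\<Sum>i\<in>UNIV. rho * (\<Sum>j\<in>UNIV. P$i$j * bregman c (x t j)) + delta i * bregman c (x t i))"
      by (rule sum_mono) (use peri in \<open>simp add: X'_def N_def CS_def\<close>)
    have s1: "(\<Sum>i\<in>UNIV. (X' i - c) \<bullet> (N i - mix P N i)) = ip r N"
    proof -
      have "(\<Sum>i\<in>UNIV. (X' i - c) \<bullet> (N i - mix P N i)) = ip (\<lambda>i. X' i - c) (\<lambda>i. N i - mix P N i)"
        by (simp add: ip_def)
      also have "\<dots> = ip (\<lambda>i. (X' i - c) - mix P (\<lambda>i. X' i - c) i) N"
        by (rule ip_lap_sym[OF sym, symmetric])
      also have "(\<lambda>i. (X' i - c) - mix P (\<lambda>i. X' i - c) i) = r"
        unfolding r_def lap_def by (rule lap_shift[OF st])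
      finally show ?thesis .
    qed
    have s2: "(\<Sum>i\<in>UNIV. rho * (CS i / 2)) \<ge> rho / 4 * ip r r"
    proof -
      have "ip X' (lap X') \<le> (\<Sum>i\<in>UNIV. CS i)"
        unfolding lap_def CS_def by (rule cross_sum[OF sym st psd])
      moreover have "ip r r \<le> 2 * ip X' (lap X')" unfolding r_def lap_def by (rule lap_sq[OF sym st])
      ultimately have "ip r r / 4 \<le> (\<Sum>i\<in>UNIV. CS i) / 2" by simp
      then have "rho * (ip r r / 4) \<le> rho * ((\<Sum>i\<in>UNIV. CS i) / 2)" using params(1) by simp
      moreover have "(\<Sum>i\<in>UNIV. rho * (CS i / 2)) = rho * ((\<Sum>i\<in>UNIV. CS i) / 2)"
        by (simp add: sum_distrib_left sum_divide_distrib)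
      ultimately show ?thesis by simp
    qed
    have s3: "(\<Sum>i\<in>UNIV. rho * (\<Sum>j\<in>UNIV. P$i$j * bregman c (x t j)) + delta i * bregman c (x t i)) = E t"
    proof -
      have "(\<Sum>i\<in>UNIV. \<Sum>j\<in>UNIV. P$i$j * bregman c (x t j)) = (\<Sum>j\<in>UNIV. \<Sum>i\<in>UNIV. P$i$j * bregman c (x t j))"
        by (rule sum.swap)
      also have "\<dots> = (\<Sum>j\<in>UNIV. bregman c (x t j))"
        using cs by (simp add: sum_distrib_right[symmetric])
      finally have "(\<Sum>i\<in>UNIV. rho * (\<Sum>j\<in>UNIV. P$i$j * bregman c (x t j))) = (\<Sum>i\<in>UNIV. rho * bregman c (x t i))"
        by (simp add: sum_distrib_left[symmetric])
      then show ?thesis unfolding E_def by (simp add: sum.distrib distrib_right)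
    qed
    have s4: "(\<Sum>i\<in>UNIV. (rho + delta i) * bregman c (X' i)) = E (Suc t)" by (simp add: E_def X'_def)
    have S: "(\<Sum>i\<in>UNIV. F i (X' i) - F i c) + ip r N + rho / 4 * ip r r + E (Suc t) \<le> E t"
      using sumi s1 s2 s3 s4 by (simp add: sum.distrib)
    have nuS: "(\<lambda>i. nu (Suc t) i - V i) = (\<lambda>i. A i + tau *\<^sub>R r i)"
      by (rule ext) (simp add: nu_step A_def N_def r_def lap_def mix_def X'_def scaleR_diff_right algebra_simps)
    have D': "ip (\<lambda>i. nu (Suc t) i - V i) (\<lambda>i. nu (Suc t) i - V i) = ip A A + 2 * tau * ip A r + tau^2 * ip r r"
      unfolding nuS by (rule ip_expand)
    have rN: "ip r N = ip r V + ip A r"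
    proof -
      have "N = (\<lambda>i. V i + A i)" by (simp add: A_def)
      then have "ip r N = ip r (\<lambda>i. V i + A i)" by simp
      also have "\<dots> = ip r V + ip r A" by (rule ip_add_right)
      finally show ?thesis by (simp add: ip_comm[of r A])
    qed
    have tt: "2 * tau * (rho / 4) = tau^2" using params(2) by (simp add: power2_eq_square)
    have "2 * tau * ((\<Sum>i\<in>UNIV. F i (X' i) - F i c) + ip r N + rho / 4 * ip r r + E (Suc t)) \<le> 2 * tau * E t"
      using S tau0 by (intro mult_left_mono) auto
    then have "2 * tau * (\<Sum>i\<in>UNIV. F i (X' i) - F i c) + 2 * tau * ip r V + 2 * tau * ip A r + (2 * tau * (rho / 4)) * ip r r + 2 * tau * E (Suc t) \<le> 2 * tau * E t"
      unfolding rN by (simp add: algebra_simps)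
    then have "2 * tau * ((\<Sum>i\<in>UNIV. F i (X' i) - F i c) + ip r V + E (Suc t)) + (ip A A + 2 * tau * ip A r + tau^2 * ip r r) \<le> 2 * tau * E t + ip A A"
      unfolding tt by (simp add: algebra_simps)
    then show ?thesis unfolding D'[symmetric] by (simp add: X'_def r_def A_def N_def)
  qed
  have Tp: "real T > 0" using T by simp
  define Phi where "Phi t V = (\<Sum>i\<in>UNIV. F i (x (Suc t) i) - F i c) + ip (lap (x (Suc t))) V" for t V
  have tele: "2 * tau * (\<Sum>t<T. Phi t V) \<le> 2 * tau * E 0 + ip V V" for V
  proof -
    define Psi where "Psi t = 2 * tau * E t + ip (\<lambda>i. nu t i - V i) (\<lambda>i. nu t i - V i)" for t
    have "2 * tau * Phi t V \<le> Psi t - Psi (Suc t)" for t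
      using step[of t V] unfolding Psi_def Phi_def by (simp add: algebra_simps)
    then have "(\<Sum>t<T. 2 * tau * Phi t V) \<le> (\<Sum>t<T. Psi t - Psi (Suc t))" by (rule sum_mono)
    also have "\<dots> = Psi 0 - Psi T" by (rule sum_lessThan_telescope')
    also have "\<dots> \<le> Psi 0"
    proof -
      have "0 \<le> 2 * tau * E T" using Enn[of T] tau0 by simp
      then show ?thesis using ip_self_nonneg[of "\<lambda>i. nu T i - V i"] unfolding Psi_def by linarith
    qed
    also have "Psi 0 = 2 * tau * E 0 + ip V V"
      unfolding Psi_def init(1) by (simp add: ip_def)
    finally show ?thesis by (simp add: sum_distrib_left)
  qed
  define xbar where "xbar i = (1 / real T) *\<^sub>R (\<Sum>t = 1..T. x t i)" for i
  have xbar_eq: "xbar i = (\<Sum>t<T. (1 / real T) *\<^sub>R x (Suc t) i)" for i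
    unfolding xbar_def sum_shift by (simp add: scaleR_sum_right)
  have wsum: "(\<Sum>t<T. 1 / real T) = 1" using Tp by simp
  have convS: "convex (prob_simplex :: (real^'n) set)"
  proof (rule convexI)
    fix u v :: "real^'n" and a b :: real
    assume "u \<in> prob_simplex" "v \<in> prob_simplex" "0 \<le> a" "0 \<le> b" "a + b = 1"
    then show "a *\<^sub>R u + b *\<^sub>R v \<in> prob_simplex"
      using simplex_convex_comb[of u v b] by (simp add: eq_diff_eq[symmetric])
  qed
  have xbarS: "xbar i \<in> prob_simplex" for i
    unfolding xbar_eq by (rule convex_sum[OF _ convS wsum]) (auto simp: xS)
  have fbar: "f i (xbar i) \<le> ereal (\<Sum>t<T. 1 / real T * F i (x (Suc t) i))" for i
    unfolding xbar_eq by (rule cvx_sum[OF cf _ wsum]) (auto simp: fxe)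
  have fbare: "f i (xbar i) = ereal (F i (xbar i))" for i
  proof -
    have "f i (xbar i) \<noteq> \<infinity>" using fbar[of i] by auto
    moreover have "f i (xbar i) \<noteq> -\<infinity>" using pf[of i] by (simp add: proper_fun_def)
    ultimately show ?thesis unfolding F_def by (cases "f i (xbar i)") auto
  qed
  have Fbar: "F i (xbar i) \<le> (\<Sum>t<T. 1 / real T * F i (x (Suc t) i))" for i
    using fbar[of i] fbare[of i] by simp
  have lapbar: "ip (lap xbar) V = (\<Sum>t<T. 1 / real T * ip (lap (x (Suc t))) V)" for V
  proof -
    have ml: "mix P xbar i = (\<Sum>t<T. (1 / real T) *\<^sub>R mix P (x (Suc t)) i)" for i
    proof -
      have "mix P xbar i = (\<Sum>j\<in>UNIV. \<Sum>t<T. P$i$j *\<^sub>R ((1 / real T) *\<^sub>R x (Suc t) j))"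
        unfolding mix_def xbar_eq by (simp add: scaleR_sum_right)
      also have "\<dots> = (\<Sum>t<T. \<Sum>j\<in>UNIV. P$i$j *\<^sub>R ((1 / real T) *\<^sub>R x (Suc t) j))" by (rule sum.swap)
      also have "\<dots> = (\<Sum>t<T. (1 / real T) *\<^sub>R mix P (x (Suc t)) i)"
        by (simp add: mix_def scaleR_sum_right mult.commute)
      finally show ?thesis .
    qed
    have "lap xbar i = (\<Sum>t<T. (1 / real T) *\<^sub>R lap (x (Suc t)) i)" for i
      unfolding lap_def using ml[of i] xbar_eq[of i]
      by (simp add: scaleR_diff_right sum_subtractf)
    then have "ip (lap xbar) V = (\<Sum>i\<in>UNIV. (\<Sum>t<T. (1 / real T) *\<^sub>R lap (x (Suc t)) i) \<bullet> V i)"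
      by (simp add: ip_def)
    also have "\<dots> = (\<Sum>i\<in>UNIV. \<Sum>t<T. 1 / real T * (lap (x (Suc t)) i \<bullet> V i))"
      by (simp add: inner_sum_left)
    also have "\<dots> = (\<Sum>t<T. \<Sum>i\<in>UNIV. 1 / real T * (lap (x (Suc t)) i \<bullet> V i))" by (rule sum.swap)
    also have "\<dots> = (\<Sum>t<T. 1 / real T * ip (lap (x (Suc t))) V)"
      by (simp add: ip_def sum_distrib_left)
    finally show ?thesis .
  qed
  have G: "(\<Sum>i\<in>UNIV. F i (xbar i) - F i c) + ip (lap xbar) V \<le> (E 0 + ip V V / (2 * tau)) / real T" for V
  proof -
    have "(\<Sum>i\<in>UNIV. F i (xbar i) - F i c) \<le> (\<Sum>i\<in>UNIV. (\<Sum>t<T. 1 / real T * F i (x (Suc t) i)) - F i c)"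
      by (rule sum_mono) (use Fbar in auto)
    also have "\<dots> = (\<Sum>i\<in>UNIV. \<Sum>t<T. 1 / real T * (F i (x (Suc t) i) - F i c))"
    proof (rule sum.cong[OF refl])
      fix i
      have "(\<Sum>t<T. 1 / real T * F i c) = F i c" using T by simp
      then show "(\<Sum>t<T. 1 / real T * F i (x (Suc t) i)) - F i c = (\<Sum>t<T. 1 / real T * (F i (x (Suc t) i) - F i c))"
        by (simp add: right_diff_distrib sum_subtractf)
    qed
    also have "\<dots> = (\<Sum>t<T. \<Sum>i\<in>UNIV. 1 / real T * (F i (x (Suc t) i) - F i c))" by (rule sum.swap)
    finally have a: "(\<Sum>i\<in>UNIV. F i (xbar i) - F i c) \<le> (\<Sum>t<T. 1 / real T * (\<Sum>i\<in>UNIV. F i (x (Suc t) i) - F i c))"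
      by (simp add: sum_distrib_left)
    have "(\<Sum>i\<in>UNIV. F i (xbar i) - F i c) + ip (lap xbar) V \<le> (\<Sum>t<T. 1 / real T * Phi t V)"
      using a lapbar[of V] unfolding Phi_def by (simp add: distrib_left sum.distrib)
    also have "\<dots> = (\<Sum>t<T. Phi t V) / real T" by (simp add: sum_divide_distrib)
    also have "\<dots> \<le> (E 0 + ip V V / (2 * tau)) / real T"
    proof -
      have "(\<Sum>t<T. Phi t V) \<le> E 0 + ip V V / (2 * tau)"
        using tele[of V] tau0 by (simp add: field_simps)
      then show ?thesis using Tp by (simp add: divide_right_mono)
    qed
    finally show ?thesis .
  qed
  define dmax where "dmax = Max (range delta)"
  define mm where "mm = real CARD('m)"
  define nn' where "nn' = real CARD('n)"
  have dle: "delta i \<le> dmax" for i unfolding dmax_def by (rule Max_ge) auto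
  have d0: "0 \<le> dmax" using dle[of i0] params(4)[of i0] by simp
  have E0b: "E 0 \<le> mm * (rho + dmax) * ln nn'"
  proof -
    have "E 0 \<le> (\<Sum>i\<in>(UNIV::'m set). (rho + dmax) * ln nn')"
      unfolding E_def
    proof (rule sum_mono)
      fix i
      have b0: "0 \<le> bregman c (x 0 i)" by (rule bregman_nonneg[OF cS xS xP])
      have b1: "bregman c (x 0 i) \<le> ln nn'" unfolding init(2) nn'_def by (rule bregman_unif[OF cS])
      have "(rho + delta i) * bregman c (x 0 i) \<le> (rho + dmax) * bregman c (x 0 i)"
        using dle[of i] b0 by (intro mult_right_mono) auto
      also have "\<dots> \<le> (rho + dmax) * ln nn'" using b1 params(1) d0 by (intro mult_left_mono) auto
      finally show "(rho + delta i) * bregman c (x 0 i) \<le> (rho + dmax) * ln nn'" .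
    qed
    then show ?thesis by (simp add: mm_def)
  qed
  have E00: "0 \<le> E 0" by (rule Enn)
  have c1: "(\<Sum>i\<in>UNIV. F i (xbar i) - F i c) \<le> mm * (rho + dmax) * ln nn' / real T"
  proof -
    from G[of "\<lambda>i. 0"] have "(\<Sum>i\<in>UNIV. F i (xbar i) - F i c) \<le> E 0 / real T" by (simp add: ip_def)
    also have "\<dots> \<le> mm * (rho + dmax) * ln nn' / real T" using E0b Tp by (simp add: divide_right_mono)
    finally show ?thesis .
  qed
  have claim1: "(\<Sum>i\<in>UNIV. f i (xbar i)) - (\<Sum>i\<in>UNIV. f i (xs i)) \<le> ereal (mm * (rho + dmax) * ln nn' / real T)"
  proof -
    have "(\<Sum>i\<in>UNIV. f i (xbar i)) = ereal (\<Sum>i\<in>UNIV. F i (xbar i))" by (simp add: fbare sum_ereal)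
    moreover have "(\<Sum>i\<in>UNIV. f i (xs i)) = ereal (\<Sum>i\<in>UNIV. F i c)" by (simp add: xsc fc sum_ereal)
    ultimately show ?thesis using c1 by (simp add: sum_subtractf)
  qed
  define r where "r = lap xbar"
  define R where "R = ip r r"
  have R0: "R \<ge> 0" unfolding R_def by (rule ip_self_nonneg)
  define H where "H = (\<Sum>i\<in>UNIV. h i)"
  define hb where "hb = (1 / mm) *\<^sub>R H"
  define w where "w i = hb - h i" for i
  have mm0: "mm > 0" by (simp add: mm_def)
  have sumw: "(\<Sum>i\<in>UNIV. w i) = 0"
  proof (subst vec_eq_iff, rule allI)
    fix k
    have "(\<Sum>i\<in>UNIV. w i) $ k = (\<Sum>i\<in>UNIV. hb $ k - h i $ k)" by (simp add: w_def sum_component)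
    also have "\<dots> = mm * hb $ k - H $ k" by (simp add: sum_subtractf mm_def H_def sum_component)
    also have "\<dots> = 0" using mm0 by (simp add: hb_def)
    finally show "(\<Sum>i\<in>UNIV. w i) $ k = 0 $ k" by simp
  qed
  have HN: "H \<bullet> (v - c) \<ge> 0" if vS: "v \<in> prob_simplex" for v
  proof -
    have "H = - (\<Sum>i\<in>UNIV. gN i)"
    proof -
      have "H = - (\<Sum>i\<in>UNIV. nus i) + (\<Sum>i\<in>UNIV. mix P nus i) - (\<Sum>i\<in>UNIV. gN i)"
        by (simp add: H_def h_def sum.distrib sum_subtractf sum_negf mix_def)
      then show ?thesis using sum_mix[OF sym st, of nus] by simp
    qed
    moreover have "(\<Sum>i\<in>UNIV. gN i) \<bullet> (c - v) \<ge> 0"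
      unfolding inner_sum_left using gNc vS cS by (intro sum_nonneg) (auto simp: normal_cone_def)
    ultimately show ?thesis by (simp add: inner_diff_right)
  qed
  have lb: "lambda2 P < 1" using lambda2_bound[OF sym st irr psd m2] by blast
  define Wk where "Wk k = (\<chi> i. w i $ k)" for k
  have "\<forall>k. \<exists>\<nu>. \<nu> - P *v \<nu> = Wk k \<and> (1 - lambda2 P) * norm \<nu> \<le> norm (Wk k)"
  proof
    fix k
    have "onesv \<bullet> Wk k = 0"
    proof -
      have "onesv \<bullet> Wk k = (\<Sum>i\<in>UNIV. w i) $ k" by (simp add: onesv_inner Wk_def sum_component)
      then show ?thesis using sumw by simp
    qed
    then show "\<exists>\<nu>. \<nu> - P *v \<nu> = Wk k \<and> (1 - lambda2 P) * norm \<nu> \<le> norm (Wk k)"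
      by (rule solve_lap[OF sym st irr psd m2])
  qed
  then obtain nk where nk: "\<And>k. nk k - P *v nk k = Wk k" "\<And>k. (1 - lambda2 P) * norm (nk k) \<le> norm (Wk k)"
    by metis
  define vh where "vh i = (\<chi> k. nk k $ i)" for i
  have lapvh: "lap vh = w"
  proof (rule ext)
    fix i
    show "lap vh i = w i"
    proof (subst vec_eq_iff, rule allI)
      fix k
      have "(nk k - P *v nk k) $ i = Wk k $ i" using nk(1)[of k] by simp
      then have "nk k $ i - (\<Sum>j\<in>UNIV. P$i$j * nk k $ j) = w i $ k" by (simp add: Pv_comp Wk_def)
      then show "lap vh i $ k = w i $ k" by (simp add: lap_def mix_def vh_def sum_component)
    qed
  qed
  have ipw: "ip w w \<le> mm * M0"
  proof -
    have hh: "h i \<bullet> h i \<le> M0" for i using M0(2)[OF hsub[of i]] by (simp add: power2_norm_eq_inner)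
    have "ip w w = (\<Sum>i\<in>UNIV. h i \<bullet> h i) - mm * (hb \<bullet> hb)"
    proof -
      have "ip w w = (\<Sum>i\<in>UNIV. hb \<bullet> hb - 2 * (hb \<bullet> h i) + h i \<bullet> h i)"
        unfolding ip_def w_def by (rule sum.cong[OF refl]) (simp add: inner_diff_left inner_diff_right inner_commute[of "h _" hb])
      also have "\<dots> = mm * (hb \<bullet> hb) - 2 * (hb \<bullet> H) + (\<Sum>i\<in>UNIV. h i \<bullet> h i)"
        by (simp add: sum.distrib sum_subtractf sum_distrib_left[symmetric] inner_sum_right H_def mm_def)
      also have "hb \<bullet> H = mm * (hb \<bullet> hb)" using mm0 by (simp add: hb_def)
      finally show ?thesis by simp
    qed
    also have "\<dots> \<le> (\<Sum>i\<in>UNIV. h i \<bullet> h i)" using mm0 by simp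
    also have "\<dots> \<le> (\<Sum>i\<in>(UNIV::'m set). M0)" by (rule sum_mono) (rule hh)
    also have "\<dots> = mm * M0" by (simp add: mm_def)
    finally show ?thesis .
  qed
  have ipvh: "(1 - lambda2 P)^2 * ip vh vh \<le> mm * M0"
  proof -
    have "ip vh vh = (\<Sum>k\<in>UNIV. nk k \<bullet> nk k)"
    proof -
      have "ip vh vh = (\<Sum>i\<in>UNIV. \<Sum>k\<in>UNIV. nk k $ i * nk k $ i)" by (simp add: ip_def vh_def inner_vec_def)
      also have "\<dots> = (\<Sum>k\<in>UNIV. \<Sum>i\<in>UNIV. nk k $ i * nk k $ i)" by (rule sum.swap)
      finally show ?thesis by (simp add: inner_vec_def)
    qed
    moreover have "ip w w = (\<Sum>k\<in>UNIV. Wk k \<bullet> Wk k)"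
    proof -
      have "ip w w = (\<Sum>i\<in>UNIV. \<Sum>k\<in>UNIV. w i $ k * w i $ k)" by (simp add: ip_def inner_vec_def)
      also have "\<dots> = (\<Sum>k\<in>UNIV. \<Sum>i\<in>UNIV. w i $ k * w i $ k)" by (rule sum.swap)
      finally show ?thesis by (simp add: inner_vec_def Wk_def)
    qed
    moreover have "(1 - lambda2 P)^2 * (nk k \<bullet> nk k) \<le> Wk k \<bullet> Wk k" for k
    proof -
      have "((1 - lambda2 P) * norm (nk k))^2 \<le> (norm (Wk k))^2"
        using nk(2)[of k] lb by (intro power_mono) auto
      then show ?thesis by (simp add: power_mult_distrib power2_norm_eq_inner)
    qed
    ultimately have "(1 - lambda2 P)^2 * ip vh vh \<le> ip w w"
      by (simp add: sum_distrib_left sum_mono)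
    then show ?thesis using ipw by simp
  qed
  have LB: "- ip r vh \<le> (\<Sum>i\<in>UNIV. F i (xbar i) - F i c)"
  proof -
    have "(\<Sum>i\<in>UNIV. h i \<bullet> (xbar i - c)) \<le> (\<Sum>i\<in>UNIV. F i (xbar i) - F i c)"
    proof (rule sum_mono)
      fix i show "h i \<bullet> (xbar i - c) \<le> F i (xbar i) - F i c"
        using subgrad_ineq[OF hsubc[of i] fbare[of i] fc[of i]] by simp
    qed
    moreover have "(\<Sum>i\<in>UNIV. h i \<bullet> (xbar i - c)) = (\<Sum>i\<in>UNIV. hb \<bullet> (xbar i - c)) - ip w (\<lambda>i. xbar i - c)"
      by (simp add: w_def ip_def inner_diff_left sum_subtractf)
    moreover have "(\<Sum>i\<in>UNIV. hb \<bullet> (xbar i - c)) \<ge> 0"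
      using HN xbarS mm0 by (intro sum_nonneg) (simp add: hb_def)
    moreover have "ip w (\<lambda>i. xbar i - c) = ip r vh"
    proof -
      have "ip w (\<lambda>i. xbar i - c) = ip (lap vh) (\<lambda>i. xbar i - c)" by (simp add: lapvh)
      also have "\<dots> = ip vh (\<lambda>i. (xbar i - c) - mix P (\<lambda>i. xbar i - c) i)"
        unfolding lap_def by (rule ip_lap_sym[OF sym])
      also have "(\<lambda>i. (xbar i - c) - mix P (\<lambda>i. xbar i - c) i) = r"
        unfolding r_def lap_def by (rule lap_shift[OF st])
      finally show ?thesis by (simp add: ip_comm)
    qed
    ultimately show ?thesis by linarith
  qed
  have lb0: "0 < 1 - lambda2 P" using lb by simp
  have N0: "ip vh vh \<ge> 0" by (rule ip_self_nonneg)
  have M00: "0 \<le> M0" by (rule M0(1))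
  have t1nn: "0 \<le> 4 * mm * M0 / (rho^2 * (1 - lambda2 P)^2 * real T)"
    using M00 mm0 params(1) lb0 Tp by (intro divide_nonneg_pos mult_nonneg_nonneg) auto
  have claim2: "1/2 * R \<le> 4 * mm * M0 / (rho^2 * (1 - lambda2 P)^2 * real T)
      + 4 * mm * (rho + dmax) * ln nn' / (rho * real T)"
  proof (cases "T \<ge> 2")
    case True
    define \<kappa> where "\<kappa> = tau * real T / 2"
    define V where "V = (\<lambda>i. vh i + \<kappa> *\<^sub>R r i)"
    have GV: "(\<Sum>i\<in>UNIV. F i (xbar i) - F i c) + ip r V \<le> (E 0 + ip V V / (2 * tau)) / real T"
      using G[of V] unfolding r_def .
    have rV: "ip r V = ip r vh + \<kappa> * R"
      unfolding V_def R_def by (simp add: ip_add_right ip_scale_right)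
    have VV: "ip V V \<le> 2 * ip vh vh + 2 * \<kappa>^2 * R"
    proof -
      have "ip V V \<le> 2 * ip vh vh + 2 * ip (\<lambda>i. \<kappa> *\<^sub>R r i) (\<lambda>i. \<kappa> *\<^sub>R r i)"
        unfolding V_def by (rule parallelogram)
      also have "ip (\<lambda>i. \<kappa> *\<^sub>R r i) (\<lambda>i. \<kappa> *\<^sub>R r i) = \<kappa>^2 * R"
        unfolding R_def by (simp add: ip_scale_left ip_scale_right power2_eq_square)
      finally show ?thesis by simp
    qed
    have "(E 0 + ip V V / (2 * tau)) / real T \<le> (E 0 + (2 * ip vh vh + 2 * \<kappa>^2 * R) / (2 * tau)) / real T"
      using VV tau0 Tp by (intro divide_right_mono add_left_mono) auto
    then have h: "\<kappa> * R \<le> (E 0 + (2 * ip vh vh + 2 * \<kappa>^2 * R) / (2 * tau)) / real T"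
      using GV rV LB by linarith
    have T2: "real T \<ge> 2" using True by simp
    have NL: "ip vh vh \<le> mm * M0 / (1 - lambda2 P)^2"
      using ipvh lb0 by (simp add: pos_le_divide_eq mult.commute)
    have fa: "R / 2 \<le> (mm * M0 / (1 - lambda2 P)^2) / (tau^2 * real T) + 2 * (mm * (rho + dmax) * ln nn') / (tau * real T)"
      by (rule final_arith[OF tau0 T2 R0 N0 E00 h \<kappa>_def NL E0b])
    have eq1: "(mm * M0 / (1 - lambda2 P)^2) / (tau^2 * real T) = 4 * mm * M0 / (rho^2 * (1 - lambda2 P)^2 * real T)"
    proof -
      obtain d where d: "d = (1 - lambda2 P)^2" by simp
      have dp: "d > 0" using d lb0 by simp
      have rt: "rho = 2 * tau" using params(2) by simp
      have "(mm * M0 / d) / (tau^2 * real T) = 4 * mm * M0 / ((2 * tau)^2 * d * real T)"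
        using dp tau0 Tp by (simp add: field_simps power2_eq_square)
      then show ?thesis unfolding d rt .
    qed
    have eq2: "2 * (mm * (rho + dmax) * ln nn') / (tau * real T) = 4 * mm * (rho + dmax) * ln nn' / (rho * real T)"
    proof -
      have rt: "rho = 2 * tau" using params(2) by simp
      show ?thesis unfolding rt using tau0 Tp by (simp add: field_simps)
    qed
    show ?thesis using fa unfolding eq1 eq2 by simp
  next
    case False
    then have T1: "T = 1" using T by simp
    show ?thesis
    proof (cases "CARD('n) = 1")
      case True
      have xe: "xbar i = xbar i0" for i by (rule simplex_n1[OF True xbarS xbarS])
      have "r = (\<lambda>i. 0)"
      proof -
        have "xbar = (\<lambda>i. xbar i0)" using xe by auto
        then have "mix P xbar = xbar" using mix_const[OF st, of "xbar i0"] by simp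
        then show ?thesis by (simp add: r_def lap_def)
      qed
      then have "R = 0" by (simp add: R_def ip_def)
      moreover have "nn' = 1" using True by (simp add: nn'_def)
      ultimately show ?thesis using t1nn by simp
    next
      case False
      have "CARD('n) > 0" by simp
      then have "CARD('n) \<ge> 2" using False by linarith
      then have n2: "nn' \<ge> 2" unfolding nn'_def by simp
      have Rb: "R \<le> 2 * mm" unfolding R_def r_def lap_def mm_def by (rule lap_bound_simplex[OF st xbarS])
      have l4: "1/4 \<le> ln nn'" by (rule ln_ge_quarter[OF n2])
      have "1/2 * R \<le> mm" using Rb by simp
      also have "\<dots> \<le> 4 * mm * ln nn'" using l4 mm0 by simp
      also have "\<dots> \<le> 4 * mm * (rho + dmax) * ln nn' / rho"
      proof -
        have "4 * mm * ln nn' * rho \<le> 4 * mm * ln nn' * (rho + dmax)"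
          using d0 mm0 l4 by (intro mult_left_mono) auto
        then show ?thesis using params(1) by (simp add: le_divide_eq mult.commute mult.left_commute)
      qed
      also have "\<dots> = 4 * mm * (rho + dmax) * ln nn' / (rho * real T)" using T1 by simp
      finally show ?thesis using t1nn by simp
    qed
  qed
  have xb: "(\<lambda>i. (1 / real T) *\<^sub>R (\<Sum>t = 1..T. x t i)) = xbar" by (rule ext) (simp add: xbar_def)
  have Req: "(\<Sum>i\<in>UNIV. (norm (xbar i - (\<Sum>j\<in>UNIV. P$i$j *\<^sub>R xbar j)))\<^sup>2) = R"
    by (simp add: R_def r_def lap_def ip_def mix_def power2_norm_eq_inner)
  show ?thesis
    unfolding Let_def xb Req using claim1 claim2 by (simp add: dmax_def mm_def nn'_def)
qed

end
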